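(* For all integers $k,f,n$ with $1\le k\le f-1$ and $f\le n-1$, $\mathrm{Cons}(n,f)$ is not ${}^cC$-reducible to $k\text{-TAg}(n,f)$ (in particular, it is not $C$-reducible to $k\text{-TAg}(n,f)$).
   Context: Model: a finite set of processes runs an asynchronous algorithm communicating by reliable message passing with unbounded delays and speeds; processes fail only by crashing. Time is $\mathcal T=\mathbb N$; a failure pattern $F$ for $\Pi$ is a nondecreasing map $\mathcal T\to2^\Pi$, $Faulty(F)=\bigcup_tF(t)$. A binary agreement problem $P$ for $\Pi$ maps each $(F,\vec V)$, $\vec V\in\{0,1\}^\Pi$, to a nonempty $P(F,\vec V)\subseteq\{0,1\}$; a task is $T=(P,f)$. An algorithm solves $T$ if in every run with $|Faulty(F)|\le f$ and initial values $\vec V$: every correct process eventually decides, decisions are irrevocable, no two processes decide differently, and decisions lie in $P(F,\vec V)$. $k\text{-TAg}_\Pi(F,\vec V)=\{0\}$ if at least $k$ entries of $\vec V$ are $0$; $=\{1\}$ if $\vec V$ is all-ones and $|Faulty(F)|\le k-1$; $=\{0,1\}$ otherwise; $k\text{-TAg}(\Pi,f)=(k\text{-TAg}_\Pi,f)$; $k\text{-TAg}(n,f)$ and $\mathrm{Cons}(n,f)=n\text{-TAg}(n,f)$ are the versions for $\Pi=\{1,\dots,n\}$. Oracles: for $T=(P,f)$ on $\Pi$, an $f$-resilient oracle suitable for $P$ is a black box with consultants $\Pi$ whose history is a sequence of successive consultations, in each of which every consultant may submit at most one query in $\{0,1\}$ and the oracle returns a common response $d$ with $d\in P(F,\vec V)$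 for every $\vec V$ extending the partial query vector (the oracle may use the whole failure pattern, including future crashes), and every correct querier gets the response whenever at least $|\Pi|-f$ consultants query; $\mathcal O.T$ is the most general such oracle. It is consistent if, in every history, for any two consultations with query vectors $\vec W_1\supseteq\vec W_2$, answering $d$ on $\vec W_2$ implies answering $d$ on $\vec W_1$; ${}^c\mathcal O.T$ is the most general consistent one. $T_1\le_C T_2$ (resp. $T_1\le_{{}^cC}T_2$) means there is an algorithm solving $T_1$ whose processes may additionally consult the oracle $\mathcal O.T_2$ (resp. ${}^c\mathcal O.T_2$); $C$-reducibility implies ${}^cC$-reducibility. *)

theory Defs
  imports Main
begin

text \<open>Binary values: False = 0, True = 1.\<close>

type_synonym fpattern = "nat \<Rightarrow> nat set"
type_synonym problem = "fpattern \<Rightarrow> (nat \<Rightarrow> bool) \<Rightarrow> bool set"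
type_synonym task = "problem \<times> nat"

definition Faulty :: "fpattern \<Rightarrow> nat set" where
  "Faulty F = (\<Union>t. F t)"

definition failure_pattern :: "nat set \<Rightarrow> fpattern \<Rightarrow> bool" where
  "failure_pattern \<Pi> F \<longleftrightarrow> mono F \<and> (\<forall>t. F t \<subseteq> \<Pi>)"

definition kTAg :: "nat set \<Rightarrow> nat \<Rightarrow> problem" where
  "kTAg \<Pi> k F V =
     (if k \<le> card {p \<in> \<Pi>. \<not> V p} then {False}
      else if (\<forall>p\<in>\<Pi>. V p) \<and> card (Faulty F) \<le> k - 1 then {True}
      else {False, True})"

definition kTAg_task :: "nat set \<Rightarrow> nat \<Rightarrow> nat \<Rightarrow> task" where
  "kTAg_task \<Pi> k f = (kTAg \<Pi> k, f)"

definition Cons :: "nat \<Rightarrow> nat \<Rightarrow> task" where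
  "Cons n f = kTAg_task {1..n} n f"

text \<open>A step takes an input (nothing,
  a message from a sender, or an oracle response for a consultation), and yields
  a new state, a list of messages (destination, content) to send, and possibly a
  query.  The i-th query of a process (counting from 0) belongs to consultation i.\<close>

datatype 'm input = NoIn | InMsg nat 'm | InResp nat bool

record ('s, 'm) alg =
  ini :: "nat \<Rightarrow> bool \<Rightarrow> 's"
  step_fn :: "nat \<Rightarrow> 's \<Rightarrow> 'm input \<Rightarrow> 's \<times> (nat \<times> 'm) list \<times> bool option"
  decision :: "'s \<Rightarrow> bool option"

type_synonym 'm schedule = "nat \<Rightarrow> (nat \<times> 'm input) option"

primrec exec :: "('s,'m) alg \<Rightarrow> (nat \<Rightarrow> bool) \<Rightarrow> 'm schedule \<Rightarrow> nat \<Rightarrow> nat \<Rightarrow> 's" where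
  "exec A V S 0 = (\<lambda>p. ini A p (V p))"
| "exec A V S (Suc t) = (case S t of None \<Rightarrow> exec A V S t
     | Some (p, e) \<Rightarrow> (exec A V S t)(p := fst (step_fn A p (exec A V S t p) e)))"

definition sent :: "('s,'m) alg \<Rightarrow> (nat \<Rightarrow> bool) \<Rightarrow> 'm schedule \<Rightarrow> nat \<Rightarrow> (nat \<times> 'm) list" where
  "sent A V S t = (case S t of None \<Rightarrow> []
     | Some (p, e) \<Rightarrow> fst (snd (step_fn A p (exec A V S t p) e)))"

definition qout :: "('s,'m) alg \<Rightarrow> (nat \<Rightarrow> bool) \<Rightarrow> 'm schedule \<Rightarrow> nat \<Rightarrow> bool option" where
  "qout A V S t = (case S t of None \<Rightarrow> None
     | Some (p, e) \<Rightarrow> snd (snd (step_fn A p (exec A V S t p) e)))"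

definition steps_at :: "'m schedule \<Rightarrow> nat \<Rightarrow> nat \<Rightarrow> bool" where
  "steps_at S p t \<longleftrightarrow> (\<exists>e. S t = Some (p, e))"

definition nq :: "('s,'m) alg \<Rightarrow> (nat \<Rightarrow> bool) \<Rightarrow> 'm schedule \<Rightarrow> nat \<Rightarrow> nat \<Rightarrow> nat" where
  "nq A V S p t = card {t'. t' < t \<and> steps_at S p t' \<and> qout A V S t' \<noteq> None}"

definition queried :: "('s,'m) alg \<Rightarrow> (nat \<Rightarrow> bool) \<Rightarrow> 'm schedule \<Rightarrow> nat \<Rightarrow> nat \<Rightarrow> bool \<Rightarrow> nat \<Rightarrow> bool" where
  "queried A V S p c v t \<longleftrightarrow> steps_at S p t \<and> qout A V S t = Some v \<and> nq A V S p t = c"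

definition Qv :: "('s,'m) alg \<Rightarrow> (nat \<Rightarrow> bool) \<Rightarrow> 'm schedule \<Rightarrow> nat \<Rightarrow> nat \<Rightarrow> bool option" where
  "Qv A V S c p = (if \<exists>v t. queried A V S p c v t
                   then Some (THE v. \<exists>t. queried A V S p c v t) else None)"

definition recv_at :: "'m schedule \<Rightarrow> nat \<Rightarrow> bool" where
  "recv_at S t \<longleftrightarrow> (\<exists>p q m. S t = Some (p, InMsg q m))"

text \<open>Admissible runs of algorithm A, with failure pattern F, initial values V,
  schedule S, oracle history resp (common response of each consultation, if any;
  the oracle is the most general consistent f-resilient oracle suitable for P),
  and M matching each message reception to the send event (time, index) it
  delivers.\<close>
definition admissible ::
  "('s,'m) alg \<Rightarrow> nat set \<Rightarrow> problem \<Rightarrow> nat \<Rightarrow> fpattern \<Rightarrow> (nat \<Rightarrow> bool) \<Rightarrow>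
   'm schedule \<Rightarrow> (nat \<Rightarrow> bool option) \<Rightarrow> (nat \<Rightarrow> nat \<times> nat) \<Rightarrow> bool" where
  "admissible A \<Pi> P f F V S resp M \<longleftrightarrow>
     \<comment> \<open>only alive processes of \<Pi> take steps\<close>
     (\<forall>t p e. S t = Some (p, e) \<longrightarrow> p \<in> \<Pi> \<and> p \<notin> F t)
     \<comment> \<open>correct processes take infinitely many steps\<close>
   \<and> (\<forall>p \<in> \<Pi> - Faulty F. \<forall>t. \<exists>t' \<ge> t. steps_at S p t')
     \<comment> \<open>every received message was sent earlier to the receiver\<close>
   \<and> (\<forall>t p q m. S t = Some (p, InMsg q m) \<longrightarrow>
        fst (M t) < t \<and> steps_at S q (fst (M t)) \<and>
        snd (M t) < length (sent A V S (fst (M t))) \<and>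
        sent A V S (fst (M t)) ! snd (M t) = (p, m))
     \<comment> \<open>no message is received twice\<close>
   \<and> (\<forall>t1 t2. recv_at S t1 \<and> recv_at S t2 \<and> M t1 = M t2 \<longrightarrow> t1 = t2)
     \<comment> \<open>reliable channels: every message sent to a correct process is received\<close>
   \<and> (\<forall>t' i. i < length (sent A V S t') \<and> fst (sent A V S t' ! i) \<in> \<Pi> - Faulty F \<longrightarrow>
        (\<exists>t. recv_at S t \<and> M t = (t', i)))
     \<comment> \<open>oracle responses are delivered only to queriers, after their query, at most once,
         and equal the common response of the consultation\<close>
   \<and> (\<forall>t p c d. S t = Some (p, InResp c d) \<longrightarrow>
        resp c = Some d \<and> (\<exists>t' < t. \<exists>v. queried A V S p c v t') \<and>
        (\<forall>t'' d'. S t'' = Some (p, InResp c d') \<longrightarrow> t'' = t))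
     \<comment> \<open>suitability for P\<close>
   \<and> (\<forall>c d. resp c = Some d \<longrightarrow>
        (\<forall>W. (\<forall>p\<in>\<Pi>. \<forall>v. Qv A V S c p = Some v \<longrightarrow> W p = v) \<longrightarrow> d \<in> P F W))
     \<comment> \<open>f-resilience\<close>
   \<and> (\<forall>c. card {p \<in> \<Pi>. Qv A V S c p \<noteq> None} \<ge> card \<Pi> - f \<longrightarrow>
        (\<exists>d. resp c = Some d \<and>
           (\<forall>p \<in> \<Pi> - Faulty F. Qv A V S c p \<noteq> None \<longrightarrow> (\<exists>t. S t = Some (p, InResp c d)))))
     \<comment> \<open>consistency\<close>
   \<and> (\<forall>c1 c2 d. (\<forall>p\<in>\<Pi>. Qv A V S c2 p \<noteq> None \<longrightarrow> Qv A V S c1 p = Qv A V S c2 p)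
        \<and> resp c2 = Some d \<longrightarrow> resp c1 = Some d)"

text \<open>A solves T1 using the most general consistent oracle for T2
  (witnessing \<open>T1 \<le>_{cC} T2\<close>).\<close>
definition solves_with_consistent_oracle ::
  "('s,'m) alg \<Rightarrow> nat set \<Rightarrow> task \<Rightarrow> task \<Rightarrow> bool" where
  "solves_with_consistent_oracle A \<Pi> T1 T2 \<longleftrightarrow>
    (\<forall>F V S resp M.
       failure_pattern \<Pi> F \<and> card (Faulty F) \<le> snd T1 \<and>
       admissible A \<Pi> (fst T2) (snd T2) F V S resp M \<longrightarrow>
         (\<forall>p \<in> \<Pi> - Faulty F. \<exists>t. decision A (exec A V S t p) \<noteq> None)
       \<and> (\<forall>p\<in>\<Pi>. \<forall>t t' d. t \<le> t' \<and> decision A (exec A V S t p) = Some d \<longrightarrow>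
             decision A (exec A V S t' p) = Some d)
       \<and> (\<forall>p\<in>\<Pi>. \<forall>q\<in>\<Pi>. \<forall>t t' d d'. decision A (exec A V S t p) = Some d \<and>
             decision A (exec A V S t' q) = Some d' \<longrightarrow> d = d')
       \<and> (\<forall>p\<in>\<Pi>. \<forall>t d. decision A (exec A V S t p) = Some d \<longrightarrow> d \<in> fst T1 F V))"

end

theory Submission
  imports Defs "HOL-Library.Nat_Bijection"
begin

datatype ev = ENo nat | EMsg nat nat nat nat | EResp nat nat

fun proc :: "ev \<Rightarrow> nat" where
  "proc (ENo p) = p" | "proc (EMsg p q l i) = p" | "proc (EResp p c) = p"

fun dkey :: "ev \<Rightarrow> (nat \<times> nat \<times> nat) option" where
  "dkey (EMsg p q l i) = Some (q,l,i)" | "dkey _ = None"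

record ('s,'m) cfg =
  cst :: "nat \<Rightarrow> 's"
  clc :: "nat \<Rightarrow> nat"
  ctr :: "nat \<times> nat \<times> nat \<Rightarrow> (nat \<times> 'm) option"
  cnq :: "nat \<Rightarrow> nat"
  cR :: "nat \<Rightarrow> nat set"

fun inp :: "('s,'m) cfg \<Rightarrow> ev \<Rightarrow> 'm input" where
  "inp c (ENo p) = NoIn"
| "inp c (EMsg p q l i) = InMsg q (snd (the (ctr c (q,l,i))))"
| "inp c (EResp p k) = InResp k False"

fun legal :: "('s,'m) cfg \<Rightarrow> ev \<Rightarrow> bool" where
  "legal c (ENo p) = True"
| "legal c (EMsg p q l i) = (\<exists>m. ctr c (q,l,i) = Some (p,m))"
| "legal c (EResp p k) = (k < cnq c p \<and> k \<notin> cR c p)"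

definition res :: "('s,'m) alg \<Rightarrow> ('s,'m) cfg \<Rightarrow> ev \<Rightarrow> 's \<times> (nat \<times> 'm) list \<times> bool option" where
  "res A c e = step_fn A (proc e) (cst c (proc e)) (inp c e)"

definition stepc :: "('s,'m) alg \<Rightarrow> ('s,'m) cfg \<Rightarrow> ev \<Rightarrow> ('s,'m) cfg" where
  "stepc A c e = (let p = proc e; r = res A c e; msgs = fst (snd r) in
   \<lparr> cst = (cst c)(p := fst r),
     clc = (clc c)(p := Suc (clc c p)),
     ctr = (\<lambda>x. if fst x = p \<and> fst (snd x) = clc c p \<and> snd (snd x) < length msgs
                then Some (msgs ! snd (snd x))
                else if dkey e = Some x then None else ctr c x),
     cnq = (cnq c)(p := (if snd (snd r) = None then cnq c p else Suc (cnq c p))),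
     cR = (case e of EResp _ k \<Rightarrow> (cR c)(p := insert k (cR c p)) | _ \<Rightarrow> cR c) \<rparr>)"

definition init :: "('s,'m) alg \<Rightarrow> (nat \<Rightarrow> bool) \<Rightarrow> ('s,'m) cfg" where
  "init A V = \<lparr> cst = (\<lambda>p. ini A p (V p)), clc = (\<lambda>_. 0), ctr = (\<lambda>_. None),
      cnq = (\<lambda>_. 0), cR = (\<lambda>_. {}) \<rparr>"

definition run :: "('s,'m) alg \<Rightarrow> ('s,'m) cfg \<Rightarrow> ev list \<Rightarrow> ('s,'m) cfg" where
  "run A c xs = foldl (stepc A) c xs"

fun legal_run :: "('s,'m) alg \<Rightarrow> nat set \<Rightarrow> ('s,'m) cfg \<Rightarrow> ev list \<Rightarrow> bool" where
  "legal_run A P c [] = True"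
| "legal_run A P c (e # es) = (proc e \<in> P \<and> legal c e \<and> legal_run A P (stepc A c e) es)"

definition wf :: "('s,'m) cfg \<Rightarrow> bool" where
  "wf c \<longleftrightarrow> (\<forall>q l i. ctr c (q,l,i) \<noteq> None \<longrightarrow> l < clc c q)"

lemma run_Nil[simp]: "run A c [] = c" by (simp add: run_def)
lemma run_Cons[simp]: "run A c (e # es) = run A (stepc A c e) es" by (simp add: run_def)
lemma run_append[simp]: "run A c (xs @ ys) = run A (run A c xs) ys" by (simp add: run_def)

lemma legal_run_append[simp]:
  "legal_run A P c (xs @ ys) = (legal_run A P c xs \<and> legal_run A P (run A c xs) ys)"
  by (induction xs arbitrary: c) auto

lemma legal_run_mono: "legal_run A P c xs \<Longrightarrow> P \<subseteq> Q \<Longrightarrow> legal_run A Q c xs"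
  by (induction xs arbitrary: c) auto

lemma legal_run_procs: "legal_run A P c xs \<Longrightarrow> e \<in> set xs \<Longrightarrow> proc e \<in> P"
  by (induction xs arbitrary: c) auto

lemma stepc_simps:
  "cst (stepc A c e) = (cst c)(proc e := fst (res A c e))"
  "clc (stepc A c e) = (clc c)(proc e := Suc (clc c (proc e)))"
  "ctr (stepc A c e) x = (if fst x = proc e \<and> fst (snd x) = clc c (proc e) \<and> snd (snd x) < length (fst (snd (res A c e)))
                then Some (fst (snd (res A c e)) ! snd (snd x))
                else if dkey e = Some x then None else ctr c x)"
  "cnq (stepc A c e) = (cnq c)(proc e := (if snd (snd (res A c e)) = None then cnq c (proc e) else Suc (cnq c (proc e))))"
  "cR (stepc A c e) = (case e of EResp _ k \<Rightarrow> (cR c)(proc e := insert k (cR c (proc e))) | _ \<Rightarrow> cR c)"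
  by (simp_all add: stepc_def Let_def)

lemma wf_init: "wf (init A V)" by (simp add: wf_def init_def)

lemma wfD: "wf c \<Longrightarrow> ctr c (q,l,i) = Some v \<Longrightarrow> l < clc c q"
  unfolding wf_def by blast

lemma wf_step: assumes "wf c" shows "wf (stepc A c e)"
  unfolding wf_def
proof (intro allI impI)
  fix q l i assume h: "ctr (stepc A c e) (q,l,i) \<noteq> None"
  show "l < clc (stepc A c e) q"
  proof (cases "q = proc e \<and> l = clc c (proc e)")
    case True then show ?thesis by (simp add: stepc_simps)
  next
    case False
    then obtain v where "ctr c (q,l,i) = Some v" using h by (auto simp: stepc_simps split: if_splits)
    then have "l < clc c q" using wfD[OF assms] by blast
    then show ?thesis by (auto simp: stepc_simps)
  qed
qed

lemma wf_run: "wf c \<Longrightarrow> wf (run A c xs)"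
  by (induction xs arbitrary: c) (auto simp: wf_step)

lemma clc_mono_step: "clc c q \<le> clc (stepc A c e) q" by (simp add: stepc_simps)
lemma cnq_mono_step: "cnq c q \<le> cnq (stepc A c e) q" by (simp add: stepc_simps)
lemma cR_mono_step: "cR c q \<subseteq> cR (stepc A c e) q" by (auto simp: stepc_simps split: ev.splits)

lemma stay_legal:
  assumes "legal c e" "legal c a" "a \<noteq> e" "wf c"
  shows "legal (stepc A c a) e"
proof (cases e)
  case (ENo p) then show ?thesis by simp
next
  case (EMsg p q l i)
  then obtain m where m: "ctr c (q,l,i) = Some (p,m)" using assms by auto
  have "l < clc c q" using m assms(4) wfD by blast
  moreover have "dkey a \<noteq> Some (q,l,i)"
  proof
    assume "dkey a = Some (q,l,i)"
    then obtain p' where a: "a = EMsg p' q l i" by (cases a) auto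
    then obtain m' where "ctr c (q,l,i) = Some (p',m')" using assms(2) by auto
    then have "p' = p" using m by simp
    then show False using a EMsg assms(3) by simp
  qed
  ultimately show ?thesis using EMsg m by (auto simp: stepc_simps)
next
  case (EResp p k)
  have "k \<notin> cR (stepc A c a) p"
  proof (cases a)
    case (EResp p' k')
    then show ?thesis using assms \<open>e = EResp p k\<close> by (auto simp: stepc_simps)
  qed (use assms EResp in \<open>auto simp: stepc_simps\<close>)
  moreover have "k < cnq (stepc A c a) p" using assms EResp cnq_mono_step[of c p A a]
    by auto
  ultimately show ?thesis using EResp by simp
qed

lemma stay_legal_run:
  assumes "legal c e" "legal_run A P c ys" "e \<notin> set ys" "wf c"
  shows "legal (run A c ys) e"
  using assms
proof (induction ys arbitrary: c)
  case Nil then show ?case by simp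
next
  case (Cons a ys)
  have "legal (stepc A c a) e" using stay_legal[of c e a A] Cons.prems by auto
  then show ?case using Cons.IH[of "stepc A c a"] Cons.prems wf_step by auto
qed


lemma ctr_step_keep:
  assumes "ctr c x = Some v" "wf c" "dkey e \<noteq> Some x"
  shows "ctr (stepc A c e) x = Some v"
proof -
  obtain q l i where x: "x = (q,l,i)" by (cases x) auto
  have "l < clc c q" using assms wfD x by metis
  then show ?thesis using assms x by (auto simp: stepc_simps)
qed

lemma dkey_other:
  assumes "legal c e" "legal c a" "proc e \<noteq> proc a"
  shows "dkey e \<noteq> dkey a \<or> dkey a = None"
proof (cases a)
  case (EMsg p q l i)
  show ?thesis
  proof (cases e)
    case (EMsg p' q' l' i')
    then show ?thesis using assms \<open>a = EMsg p q l i\<close> by auto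
  qed (use EMsg in auto)
qed auto

lemma inp_other:
  assumes "legal c e" "legal c a" "proc e \<noteq> proc a" "wf c"
  shows "inp (stepc A c e) a = inp c a"
proof (cases a)
  case (EMsg p q l i)
  then obtain m where m: "ctr c (q,l,i) = Some (p,m)" using assms by auto
  have "dkey e \<noteq> Some (q,l,i)" using dkey_other[OF assms(1-3)] EMsg by auto
  then have "ctr (stepc A c e) (q,l,i) = Some (p,m)" using ctr_step_keep[OF m assms(4)] by blast
  then show ?thesis using EMsg m by simp
qed auto

lemma res_other:
  assumes "legal c e" "legal c a" "proc e \<noteq> proc a" "wf c"
  shows "res A (stepc A c e) a = res A c a"
  using inp_other[OF assms] assms(3) by (simp add: res_def stepc_simps)

lemma commute1:
  assumes "legal c e" "legal c a" "proc e \<noteq> proc a" "wf c"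
  shows "stepc A (stepc A c e) a = stepc A (stepc A c a) e"
proof -
  have r1: "res A (stepc A c e) a = res A c a" using res_other[OF assms] .
  have r2: "res A (stepc A c a) e = res A c e" using res_other[OF assms(2,1) _ assms(4)] assms(3) by auto
  have d: "dkey e \<noteq> dkey a \<or> dkey a = None" using dkey_other[OF assms(1-3)] .
  have d2: "dkey a \<noteq> dkey e \<or> dkey e = None" using dkey_other[OF assms(2,1)] assms(3) by auto
  show ?thesis
  proof (rule cfg.equality)
    show "cst (stepc A (stepc A c e) a) = cst (stepc A (stepc A c a) e)"
      using r1 r2 assms(3) by (auto simp: stepc_simps fun_upd_twist)
    show "clc (stepc A (stepc A c e) a) = clc (stepc A (stepc A c a) e)"
      using assms(3) by (auto simp: stepc_simps fun_upd_twist)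
    show "cnq (stepc A (stepc A c e) a) = cnq (stepc A (stepc A c a) e)"
      using r1 r2 assms(3) by (auto simp: stepc_simps fun_upd_twist)
    show "cR (stepc A (stepc A c e) a) = cR (stepc A (stepc A c a) e)"
      using assms(3) by (auto simp: stepc_simps fun_upd_twist split: ev.splits)
    show "cfg.more (stepc A (stepc A c e) a) = cfg.more (stepc A (stepc A c a) e)"
      by (simp add: stepc_def Let_def)
    show "ctr (stepc A (stepc A c e) a) = ctr (stepc A (stepc A c a) e)"
    proof
      fix x :: "nat \<times> nat \<times> nat"
      obtain q l i where x: "x = (q,l,i)" by (cases x) auto
      have wfa: "\<And>v. ctr c x = Some v \<Longrightarrow> l < clc c q" using assms(4) wfD x by metis
      have la: "dkey a = Some y \<Longrightarrow> ctr c y \<noteq> None" for y using assms(2) by (cases a) auto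
      have le: "dkey e = Some y \<Longrightarrow> ctr c y \<noteq> None" for y using assms(1) by (cases e) auto
      show "ctr (stepc A (stepc A c e) a) x = ctr (stepc A (stepc A c a) e) x"
        using r1 r2 assms(3) d d2 wfa la[of x] le[of x] x
        by (auto simp: stepc_simps)
    qed
  qed
qed


lemma commute_list:
  assumes "legal c e" "wf c" "legal_run A P c ws" "proc e \<notin> P"
  shows "legal (run A c ws) e \<and> legal_run A P (stepc A c e) ws \<and>
         run A (stepc A c e) ws = stepc A (run A c ws) e"
  using assms
proof (induction ws arbitrary: c)
  case Nil then show ?case by simp
next
  case (Cons a ws)
  have pa: "proc a \<in> P" "legal c a" "legal_run A P (stepc A c a) ws" using Cons.prems by auto
  have ne: "proc e \<noteq> proc a" using pa(1) Cons.prems(4) by auto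
  have ae: "a \<noteq> e" using ne by auto
  have l1: "legal (stepc A c a) e" using stay_legal[OF Cons.prems(1) pa(2) ae Cons.prems(2)] .
  have l2: "legal (stepc A c e) a" using stay_legal[OF pa(2) Cons.prems(1) _ Cons.prems(2)] ae by auto
  have cm: "stepc A (stepc A c e) a = stepc A (stepc A c a) e"
    using commute1[OF Cons.prems(1) pa(2) ne Cons.prems(2)] .
  have IH: "legal (run A (stepc A c a) ws) e \<and> legal_run A P (stepc A (stepc A c a) e) ws \<and>
         run A (stepc A (stepc A c a) e) ws = stepc A (run A (stepc A c a) ws) e"
    using Cons.IH[OF l1 wf_step[OF Cons.prems(2)] pa(3) Cons.prems(4)] .
  show ?case using IH cm l2 pa(1) ne by simp
qed

definition modst :: "('s,'m) cfg \<Rightarrow> nat \<Rightarrow> 's \<Rightarrow> ('s,'m) cfg" where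
  "modst c p s = c\<lparr>cst := (cst c)(p := s)\<rparr>"

lemma modst_simps[simp]:
  "cst (modst c p s) = (cst c)(p := s)" "clc (modst c p s) = clc c" "ctr (modst c p s) = ctr c"
  "cnq (modst c p s) = cnq c" "cR (modst c p s) = cR c"
  by (simp_all add: modst_def)

lemma legal_modst[simp]: "legal (modst c p s) e = legal c e"
  by (cases e) auto

lemma inp_modst[simp]: "inp (modst c p s) e = inp c e"
  by (cases e) auto

lemma step_modst:
  assumes "proc e \<noteq> p"
  shows "stepc A (modst c p s) e = modst (stepc A c e) p s"
proof -
  have r: "res A (modst c p s) e = res A c e" using assms by (simp add: res_def)
  show ?thesis
  proof (rule cfg.equality)
    show "cfg.more (stepc A (modst c p s) e) = cfg.more (modst (stepc A c e) p s)"
      by (simp add: stepc_def modst_def Let_def)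
  qed (use assms r in \<open>auto simp: stepc_simps fun_upd_twist split: ev.splits\<close>)
qed

lemma run_modst:
  assumes "legal_run A P c ys" "p \<notin> P"
  shows "legal_run A P (modst c p s) ys \<and> run A (modst c p s) ys = modst (run A c ys) p s"
  using assms
proof (induction ys arbitrary: c)
  case Nil then show ?case by simp
next
  case (Cons e ys)
  have "proc e \<noteq> p" using Cons.prems by auto
  then show ?case using Cons step_modst[of e p A c s] by auto
qed

lemma init_upd: "init A (V(j := b)) = modst (init A V) j (ini A j b)"
  by (simp add: init_def modst_def fun_eq_iff)



primrec cfs :: "('s,'m) alg \<Rightarrow> (nat \<Rightarrow> bool) \<Rightarrow> (nat \<Rightarrow> ev) \<Rightarrow> nat \<Rightarrow> ('s,'m) cfg" where
  "cfs A V E 0 = init A V"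
| "cfs A V E (Suc t) = stepc A (cfs A V E t) (E t)"

definition fair :: "('s,'m) alg \<Rightarrow> (nat \<Rightarrow> bool) \<Rightarrow> nat set \<Rightarrow> (nat \<Rightarrow> ev) \<Rightarrow> bool" where
  "fair A V X E \<longleftrightarrow> (\<forall>p\<in>X. \<forall>T. \<exists>t\<ge>T. proc (E t) = p)
    \<and> (\<forall>t q l i p m. p \<in> X \<longrightarrow> ctr (cfs A V E t) (q,l,i) = Some (p,m) \<longrightarrow> (\<exists>t2. E t2 = EMsg p q l i))
    \<and> (\<forall>t p c. p \<in> X \<longrightarrow> c < cnq (cfs A V E t) p \<longrightarrow> (\<exists>t2. E t2 = EResp p c))"

lemma wf_cfs: "wf (cfs A V E t)"
  by (induction t) (auto simp: wf_init wf_step)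

lemma cfs_mono:
  assumes "t \<le> T"
  shows "clc (cfs A V E t) q \<le> clc (cfs A V E T) q \<and> cnq (cfs A V E t) q \<le> cnq (cfs A V E T) q
     \<and> cR (cfs A V E t) q \<subseteq> cR (cfs A V E T) q"
  using assms
proof (induction T rule: dec_induct)
  case base then show ?case by simp
next
  case (step T)
  then show ?case using clc_mono_step[of "cfs A V E T" q A "E T"] cnq_mono_step[of "cfs A V E T" q A "E T"]
      cR_mono_step[of "cfs A V E T" q A "E T"] by auto
qed

lemma ctr_change:
  assumes "\<forall>t. legal (cfs A V E t) (E t)" "ctr (cfs A V E t0) (q,l,i) = Some (p,m)" "t0 \<le> T"
    "ctr (cfs A V E T) (q,l,i) \<noteq> Some (p,m)"
  shows "\<exists>t'. t0 \<le> t' \<and> t' < T \<and> E t' = EMsg p q l i"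
  using assms(3,4)
proof (induction T rule: dec_induct)
  case base then show ?case using assms(2) by simp
next
  case (step T)
  show ?case
  proof (cases "ctr (cfs A V E T) (q,l,i) = Some (p,m)")
    case False then show ?thesis using step by force
  next
    case True
    have "dkey (E T) = Some (q,l,i)"
      using ctr_step_keep[OF True wf_cfs, of "E T" A] step.prems by auto
    then obtain p' where e: "E T = EMsg p' q l i" by (cases "E T") auto
    then obtain m' where "ctr (cfs A V E T) (q,l,i) = Some (p',m')" using assms(1)[rule_format, of T] by auto
    then have "p' = p" using True by simp
    then show ?thesis using e step by auto
  qed
qed

lemma cR_source:
  assumes "c \<in> cR (cfs A V E T) p"
  shows "\<exists>t'<T. E t' = EResp p c"
  using assms
proof (induction T)
  case 0 then show ?case by (simp add: init_def)
next
  case (Suc T)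
  show ?case
  proof (cases "E T = EResp p c")
    case True then show ?thesis by auto
  next
    case False
    then have "c \<in> cR (cfs A V E T) p" using Suc.prems
      by (auto simp: stepc_simps split: ev.splits if_splits)
    then show ?thesis using Suc.IH by (meson less_Suc_eq)
  qed
qed

definition jcode :: "nat \<Rightarrow> nat \<Rightarrow> nat \<Rightarrow> nat \<Rightarrow> nat" where
  "jcode kd a b cc = prod_encode (kd, prod_encode (a, prod_encode (b, cc)))"

definition jobev :: "nat set \<Rightarrow> ('s,'m) cfg \<Rightarrow> nat \<Rightarrow> ev" where
  "jobev X c s = (case prod_decode (fst (prod_decode s)) of (kd, r1) \<Rightarrow>
     case prod_decode r1 of (a, r2) \<Rightarrow> case prod_decode r2 of (b, cc) \<Rightarrow>
     (if kd = 0 \<and> a \<in> X then ENo a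
      else if kd = 1 \<and> ctr c (a,b,cc) \<noteq> None \<and> fst (the (ctr c (a,b,cc))) \<in> X
        then EMsg (fst (the (ctr c (a,b,cc)))) a b cc
      else if kd = 2 \<and> a \<in> X \<and> b < cnq c a \<and> b \<notin> cR c a then EResp a b
      else ENo (SOME p. p \<in> X)))"

lemma jobev_code:
  "jobev X c (prod_encode (jcode kd a b cc, T)) =
     (if kd = 0 \<and> a \<in> X then ENo a
      else if kd = 1 \<and> ctr c (a,b,cc) \<noteq> None \<and> fst (the (ctr c (a,b,cc))) \<in> X
        then EMsg (fst (the (ctr c (a,b,cc)))) a b cc
      else if kd = 2 \<and> a \<in> X \<and> b < cnq c a \<and> b \<notin> cR c a then EResp a b
      else ENo (SOME p. p \<in> X))"
  by (simp add: jobev_def jcode_def)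

lemma jobev_ok:
  assumes "X \<noteq> {}"
  shows "legal c (jobev X c s) \<and> proc (jobev X c s) \<in> X"
proof -
  have sx: "(SOME p. p \<in> X) \<in> X" using assms by (simp add: some_in_eq)
  show ?thesis using sx unfolding jobev_def
    by (auto split: prod.splits)
qed

primrec histf :: "ev list \<Rightarrow> (nat \<Rightarrow> ev list \<Rightarrow> ev list) \<Rightarrow> nat \<Rightarrow> ev list" where
  "histf h0 ext 0 = h0"
| "histf h0 ext (Suc s) = histf h0 ext s @ ext s (histf h0 ext s)"

lemma histf_prefix: "s \<le> s' \<Longrightarrow> \<exists>zs. histf h0 ext s' = histf h0 ext s @ zs"
proof (induction s' rule: dec_induct)
  case base then show ?case by simp
next
  case (step s') then show ?case by auto
qed


lemma gen:
  fixes ext :: "nat \<Rightarrow> ev list \<Rightarrow> ev list" and Inv :: "ev list \<Rightarrow> bool"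
  assumes X: "X \<noteq> {}" "X \<subseteq> L"
  and inv0: "Inv h0" and invL0: "\<forall>h. Inv h \<longrightarrow> legal_run A L (init A V) h"
  and ext0: "\<forall>s h. Inv h \<longrightarrow> (\<exists>ys. ext s h = ys @ [jobev X (run A (init A V) h) s])
              \<and> legal_run A X (run A (init A V) h) (ext s h) \<and> Inv (h @ ext s h)"
  shows "\<exists>E. (\<forall>t. legal (cfs A V E t) (E t)) \<and> (\<forall>t. proc (E t) \<in> (if t < length h0 then L else X))
     \<and> fair A V X E
     \<and> (\<forall>t. \<exists>h zs. Inv h \<and> t \<le> length h \<and> (\<forall>t'\<le>length h. cfs A V E t' = run A (init A V) (take t' h))
           \<and> h = h0 @ zs \<and> legal_run A X (run A (init A V) h0) zs)"
proof -
  note invL = invL0[rule_format]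
  note ext = ext0[rule_format]
  define hist where "hist = histf h0 ext"
  define E where "E t = hist (Suc t) ! t" for t
  have H1: "Inv (hist s) \<and> (\<exists>zs. hist s = h0 @ zs \<and> legal_run A X (run A (init A V) h0) zs)" for s
  proof (induction s)
    case 0 then show ?case using inv0 by (auto simp: hist_def intro: exI[of _ "[]"])
  next
    case (Suc s)
    then obtain zs where zs: "hist s = h0 @ zs" "legal_run A X (run A (init A V) h0) zs" "Inv (hist s)" by blast
    have e: "legal_run A X (run A (init A V) (hist s)) (ext s (hist s))" "Inv (hist s @ ext s (hist s))"
      using ext[OF zs(3)] by auto
    show ?case using zs e by (auto simp: hist_def intro!: exI[of _ "zs @ ext s (histf h0 ext s)"])
  qed
  have stage: "\<exists>ys. hist (Suc s) = hist s @ ys @ [jobev X (run A (init A V) (hist s)) s]" for s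
    using ext[of "hist s" s] H1[of s] by (auto simp: hist_def)
  have H2: "s \<le> length (hist s)" for s
  proof (induction s)
    case (Suc s) then show ?case using stage[of s] by fastforce
  qed simp
  have H3: "s \<le> s' \<Longrightarrow> \<exists>zs. hist s' = hist s @ zs" for s s'
    using histf_prefix unfolding hist_def by blast
  have H4: "t < length (hist s) \<Longrightarrow> E t = hist s ! t" for t s
  proof -
    assume t: "t < length (hist s)"
    obtain z1 where z1: "hist (max s (Suc t)) = hist s @ z1" using H3[of s "max s (Suc t)"] by auto
    obtain z2 where z2: "hist (max s (Suc t)) = hist (Suc t) @ z2" using H3[of "Suc t" "max s (Suc t)"] by auto
    have "t < length (hist (Suc t))" using H2[of "Suc t"] by simp
    then show ?thesis using z1 z2 t unfolding E_def by (metis nth_append)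
  qed
  have H5: "t \<le> length (hist s) \<Longrightarrow> cfs A V E t = run A (init A V) (take t (hist s))" for t s
  proof (induction t)
    case 0 then show ?case by simp
  next
    case (Suc t)
    then have "t < length (hist s)" by simp
    then show ?case using Suc H4[of t s] by (simp add: take_Suc_conv_app_nth)
  qed
  have H6: "legal (cfs A V E t) (E t)" for t
  proof -
    have t: "t < length (hist (Suc t))" using H2[of "Suc t"] by simp
    have lr: "legal_run A L (init A V) (hist (Suc t))" using invL H1 by blast
    have "hist (Suc t) = take t (hist (Suc t)) @ (hist (Suc t) ! t) # drop (Suc t) (hist (Suc t))"
      using t by (simp add: id_take_nth_drop)
    then have "legal (run A (init A V) (take t (hist (Suc t)))) (hist (Suc t) ! t)"
      using lr by (metis legal_run.simps(2) legal_run_append)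
    then show ?thesis using H5[of t "Suc t"] t E_def by simp
  qed
  have H7: "proc (E t) \<in> (if t < length h0 then L else X)" for t
  proof -
    have t: "t < length (hist (Suc t))" using H2[of "Suc t"] by simp
    obtain zs where zs: "hist (Suc t) = h0 @ zs" "legal_run A X (run A (init A V) h0) zs" using H1 by blast
    have lr: "legal_run A L (init A V) h0" using invL inv0 by blast
    show ?thesis
    proof (cases "t < length h0")
      case True
      then have "E t \<in> set h0" using zs(1) E_def by (simp add: nth_append)
      then show ?thesis using True legal_run_procs[OF lr] by auto
    next
      case False
      then have "E t \<in> set zs" using zs(1) E_def t by (simp add: nth_append)
      then show ?thesis using False legal_run_procs[OF zs(2)] by auto
    qed
  qed
  have SF: "\<exists>t\<ge>s. E t = jobev X (cfs A V E (length (hist s))) s" for s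
  proof -
    obtain ys where ys: "hist (Suc s) = hist s @ ys @ [jobev X (run A (init A V) (hist s)) s]"
      using stage by blast
    let ?t = "length (hist s) + length ys"
    have "E ?t = jobev X (run A (init A V) (hist s)) s"
      using H4[of ?t "Suc s"] ys by (simp add: nth_append)
    moreover have "cfs A V E (length (hist s)) = run A (init A V) (hist s)" using H5[of "length (hist s)" s] by simp
    moreover have "s \<le> ?t" using H2[of s] by simp
    ultimately show ?thesis by metis
  qed
  have F1: "\<forall>p\<in>X. \<forall>T. \<exists>t\<ge>T. proc (E t) = p"
  proof (intro ballI allI)
    fix p T assume p: "p \<in> X"
    obtain t where "t \<ge> prod_encode (jcode 0 p 0 0, T)" "E t = jobev X (cfs A V E (length (hist (prod_encode (jcode 0 p 0 0, T))))) (prod_encode (jcode 0 p 0 0, T))"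
      using SF by blast
    moreover have "T \<le> prod_encode (jcode 0 p 0 0, T)" by (rule le_prod_encode_2)
    ultimately have "t \<ge> T \<and> proc (E t) = p" using p by (auto simp: jobev_code)
    then show "\<exists>t\<ge>T. proc (E t) = p" by blast
  qed
  have F2: "\<forall>t q l i p m. p \<in> X \<longrightarrow> ctr (cfs A V E t) (q,l,i) = Some (p,m) \<longrightarrow> (\<exists>t2. E t2 = EMsg p q l i)"
  proof (intro allI impI)
    fix t q l i p m assume p: "p \<in> X" and c: "ctr (cfs A V E t) (q,l,i) = Some (p,m)"
    define s where "s = prod_encode (jcode 1 q l i, t)"
    define T where "T = length (hist s)"
    have tT: "t \<le> T" using H2[of s] le_prod_encode_2[of t "jcode 1 q l i"] unfolding T_def s_def by linarith
    show "\<exists>t2. E t2 = EMsg p q l i"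
    proof (cases "ctr (cfs A V E T) (q,l,i) = Some (p,m)")
      case True
      obtain t2 where "E t2 = jobev X (cfs A V E T) s" using SF T_def by blast
      then show ?thesis using True p unfolding s_def by (auto simp: jobev_code)
    next
      case False
      then show ?thesis using ctr_change[OF _ c tT] H6 by blast
    qed
  qed
  have F3: "\<forall>t p c. p \<in> X \<longrightarrow> c < cnq (cfs A V E t) p \<longrightarrow> (\<exists>t2. E t2 = EResp p c)"
  proof (intro allI impI)
    fix t p c assume p: "p \<in> X" and c: "c < cnq (cfs A V E t) p"
    define s where "s = prod_encode (jcode 2 p c 0, t)"
    define T where "T = length (hist s)"
    have tT: "t \<le> T" using H2[of s] le_prod_encode_2[of t "jcode 2 p c 0"] unfolding T_def s_def by linarith
    have c2: "c < cnq (cfs A V E T) p" using c cfs_mono[OF tT, of A V E p] by linarith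
    show "\<exists>t2. E t2 = EResp p c"
    proof (cases "c \<in> cR (cfs A V E T) p")
      case False
      obtain t2 where "E t2 = jobev X (cfs A V E T) s" using SF T_def by blast
      then show ?thesis using False p c2 unfolding s_def by (auto simp: jobev_code)
    next
      case True
      then show ?thesis using cR_source by blast
    qed
  qed
  have F4: "\<forall>t. \<exists>h zs. Inv h \<and> t \<le> length h \<and> (\<forall>t'\<le>length h. cfs A V E t' = run A (init A V) (take t' h))
           \<and> h = h0 @ zs \<and> legal_run A X (run A (init A V) h0) zs"
  proof
    fix t
    obtain zs where "hist t = h0 @ zs \<and> legal_run A X (run A (init A V) h0) zs" "Inv (hist t)" using H1 by blast
    then show "\<exists>h zs. Inv h \<and> t \<le> length h \<and> (\<forall>t'\<le>length h. cfs A V E t' = run A (init A V) (take t' h))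
           \<and> h = h0 @ zs \<and> legal_run A X (run A (init A V) h0) zs"
      using H2[of t] H5[of _ t] by blast
  qed
  show ?thesis using H6 H7 F1 F2 F3 F4 unfolding fair_def by blast
qed



definition msgs :: "('s,'m) alg \<Rightarrow> (nat \<Rightarrow> bool) \<Rightarrow> (nat \<Rightarrow> ev) \<Rightarrow> nat \<Rightarrow> (nat \<times> 'm) list" where
  "msgs A V E t = fst (snd (res A (cfs A V E t) (E t)))"

definition qo :: "('s,'m) alg \<Rightarrow> (nat \<Rightarrow> bool) \<Rightarrow> (nat \<Rightarrow> ev) \<Rightarrow> nat \<Rightarrow> bool option" where
  "qo A V E t = snd (snd (res A (cfs A V E t) (E t)))"

lemma ctr_source:
  assumes "ctr (cfs A V E t) (q,l,i) = Some x"
  shows "\<exists>t'<t. proc (E t') = q \<and> clc (cfs A V E t') q = l \<and> i < length (msgs A V E t') \<and> msgs A V E t' ! i = x"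
  using assms
proof (induction t)
  case 0 then show ?case by (simp add: init_def)
next
  case (Suc t)
  show ?case
  proof (cases "q = proc (E t) \<and> l = clc (cfs A V E t) q \<and> i < length (msgs A V E t)")
    case True
    then show ?thesis using Suc.prems by (auto simp: stepc_simps msgs_def)
  next
    case False
    then have "ctr (cfs A V E t) (q,l,i) = Some x" using Suc.prems
      by (auto simp: stepc_simps msgs_def split: if_splits)
    then show ?thesis using Suc.IH less_Suc_eq by blast
  qed
qed

lemma clc_strict:
  assumes "t1 < t2" "proc (E t1) = q"
  shows "clc (cfs A V E t1) q < clc (cfs A V E t2) q"
proof -
  have "clc (cfs A V E (Suc t1)) q = Suc (clc (cfs A V E t1) q)" using assms(2) by (simp add: stepc_simps)
  then show ?thesis using cfs_mono[of "Suc t1" t2 A V E q] assms(1) by simp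
qed

lemma clc_unique:
  assumes "proc (E t1) = q" "proc (E t2) = q" "clc (cfs A V E t1) q = clc (cfs A V E t2) q"
  shows "t1 = t2"
  using clc_strict[of t1 t2 E q A V] clc_strict[of t2 t1 E q A V] assms by (metis less_irrefl nat_neq_iff)

lemma ctr_fresh:
  assumes "i < length (msgs A V E t)"
  shows "ctr (cfs A V E (Suc t)) (proc (E t), clc (cfs A V E t) (proc (E t)), i) = Some (msgs A V E t ! i)"
  using assms by (simp add: stepc_simps msgs_def)

lemma ctr_none_persist:
  assumes "ctr (cfs A V E t) (q,l,i) = None" "l < clc (cfs A V E t) q" "t \<le> T"
  shows "ctr (cfs A V E T) (q,l,i) = None"
  using assms(3)
proof (induction T rule: dec_induct)
  case base then show ?case using assms by simp
next
  case (step T)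
  have "l < clc (cfs A V E T) q" using assms(2) cfs_mono[OF step(1), of A V E q] by linarith
  then show ?case using step by (auto simp: stepc_simps)
qed

lemma Q_source:
  assumes "c < cnq (cfs A V E t) p"
  shows "\<exists>t'<t. proc (E t') = p \<and> qo A V E t' \<noteq> None \<and> cnq (cfs A V E t') p = c"
  using assms
proof (induction t)
  case 0 then show ?case by (simp add: init_def)
next
  case (Suc t)
  show ?case
  proof (cases "c < cnq (cfs A V E t) p")
    case True then show ?thesis using Suc.IH less_Suc_eq by blast
  next
    case False
    then have "proc (E t) = p \<and> qo A V E t \<noteq> None \<and> cnq (cfs A V E t) p = c"
      using Suc.prems by (auto simp: stepc_simps qo_def split: if_splits)
    then show ?thesis by blast
  qed
qed


lemma bridge:
  fixes A :: "('s,'m) alg"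
  assumes sol: "solves_with_consistent_oracle A {1..n} (Cons n f) (kTAg_task {1..n} k f)"
  and LP: "L \<subseteq> {1..n}" and XL: "X \<subseteq> L" and cK: "card ({1..n} - L) = k"
  and cLX: "card (L - X) \<le> 1" and kf: "k + 1 \<le> f" and k1: "1 \<le> k"
  and leg: "\<forall>t. legal (cfs A V E t) (E t)"
  and pr: "\<forall>t. proc (E t) \<in> (if t < T0 then L else X)"
  and fr: "fair A V X E"
  shows "(\<forall>p\<in>X. \<exists>t. decision A (cst (cfs A V E t) p) \<noteq> None)
   \<and> (\<forall>p\<in>{1..n}. \<forall>t t' d. t \<le> t' \<and> decision A (cst (cfs A V E t) p) = Some d \<longrightarrow>
          decision A (cst (cfs A V E t') p) = Some d)
   \<and> (\<forall>p\<in>{1..n}. \<forall>q\<in>{1..n}. \<forall>t t' d d'. decision A (cst (cfs A V E t) p) = Some d \<and>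
          decision A (cst (cfs A V E t') q) = Some d' \<longrightarrow> d = d')
   \<and> (\<forall>p\<in>{1..n}. \<forall>t d. decision A (cst (cfs A V E t) p) = Some d \<longrightarrow>
          d \<in> kTAg {1..n} n (\<lambda>t. ({1..n} - L) \<union> (if T0 \<le> t then L - X else {})) V)"
proof -
  define P where "P = {1..n::nat}"
  define K where "K = P - L"
  define F where "F = (\<lambda>t::nat. K \<union> (if T0 \<le> t then L - X else {}))"
  define S where "S = (\<lambda>t. Some (proc (E t), inp (cfs A V E t) (E t)))"
  define resp where "resp = (\<lambda>c::nat. Some False)"
  define M where "M = (\<lambda>t. case E t of EMsg p q l i \<Rightarrow> (THE t'. proc (E t') = q \<and> clc (cfs A V E t') q = l, i)
                                    | _ \<Rightarrow> (0,0))"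
  have fP: "finite P" by (simp add: P_def)
  have exec_eq: "exec A V S t = cst (cfs A V E t)" for t
    by (induction t) (simp_all add: S_def init_def stepc_simps res_def)
  have sent_eq: "sent A V S t = msgs A V E t" for t
    unfolding sent_def exec_eq by (simp add: S_def msgs_def res_def)
  have qout_eq: "qout A V S t = qo A V E t" for t
    unfolding qout_def exec_eq by (simp add: S_def qo_def res_def)
  have steps_eq: "steps_at S p t \<longleftrightarrow> proc (E t) = p" for p t
    by (auto simp: steps_at_def S_def)
  have nq_eq: "nq A V S p t = cnq (cfs A V E t) p" for p t
  proof (induction t)
    case 0 then show ?case by (simp add: nq_def init_def)
  next
    case (Suc t)
    have set: "{t'. t' < Suc t \<and> steps_at S p t' \<and> qout A V S t' \<noteq> None} =
          {t'. t' < t \<and> steps_at S p t' \<and> qout A V S t' \<noteq> None} \<union>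
          (if proc (E t) = p \<and> qo A V E t \<noteq> None then {t} else {})"
      by (auto simp: steps_eq qout_eq less_Suc_eq)
    have fin: "finite {t'. t' < t \<and> steps_at S p t' \<and> qout A V S t' \<noteq> None}" by simp
    show ?case using Suc fin unfolding nq_def set
      by (auto simp: stepc_simps qo_def)
  qed
  have FaultyF: "Faulty F = K \<union> (L - X)"
  proof
    show "Faulty F \<subseteq> K \<union> (L - X)" by (auto simp: Faulty_def F_def split: if_splits)
    show "K \<union> (L - X) \<subseteq> Faulty F" unfolding Faulty_def F_def by (auto intro!: exI[of _ T0])
  qed
  have finK: "finite K" "finite (L - X)" using fP LP finite_subset by (auto simp: K_def P_def)
  have cardK: "card K = k" using cK by (simp add: K_def P_def)
  have cF1: "card (Faulty F) \<le> f"
    using card_Un_le[of K "L - X"] cardK cLX kf unfolding FaultyF by linarith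
  have cF2: "k \<le> card (Faulty F)"
    using card_mono[of "K \<union> (L - X)" K] finK cardK unfolding FaultyF by auto
  have fpat: "failure_pattern P F"
    unfolding failure_pattern_def
  proof
    show "mono F" unfolding mono_def F_def by auto
    show "\<forall>t. F t \<subseteq> P" using LP XL by (auto simp: F_def K_def P_def)
  qed
  have correct: "P - Faulty F = X" using XL LP unfolding FaultyF K_def P_def by auto
  have Mdef: "E t = EMsg p q l i \<Longrightarrow> ctr (cfs A V E t) (q,l,i) = Some (p, m) \<Longrightarrow>
      \<exists>t'. M t = (t', i) \<and> t' < t \<and> proc (E t') = q \<and> clc (cfs A V E t') q = l \<and>
        i < length (msgs A V E t') \<and> msgs A V E t' ! i = (p, m)" for t p q l i m
  proof -
    assume e: "E t = EMsg p q l i" and c: "ctr (cfs A V E t) (q,l,i) = Some (p, m)"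
    obtain t' where t': "t' < t" "proc (E t') = q" "clc (cfs A V E t') q = l" "i < length (msgs A V E t')"
       "msgs A V E t' ! i = (p, m)" using ctr_source[OF c] by blast
    have "(THE t'. proc (E t') = q \<and> clc (cfs A V E t') q = l) = t'"
      using t' clc_unique[where E=E and A=A and V=V and q=q] by (intro the_equality) auto
    then show ?thesis using t' e by (auto simp: M_def)
  qed
  have adm: "admissible A P (kTAg P k) f F V S resp M"
    unfolding admissible_def
  proof (intro conjI)
    show "\<forall>t p e. S t = Some (p, e) \<longrightarrow> p \<in> P \<and> p \<notin> F t"
    proof (intro allI impI)
      fix t p e assume "S t = Some (p, e)"
      then have p: "p = proc (E t)" by (simp add: S_def)
      have "p \<in> L" "T0 \<le> t \<Longrightarrow> p \<in> X" using pr[rule_format, of t] XL p by (auto split: if_splits)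
      then show "p \<in> P \<and> p \<notin> F t" using LP unfolding F_def K_def P_def by auto
    qed
    show "\<forall>p\<in>P - Faulty F. \<forall>t. \<exists>t'\<ge>t. steps_at S p t'"
      using fr unfolding correct fair_def steps_eq by blast
    show "\<forall>t p q m. S t = Some (p, InMsg q m) \<longrightarrow>
        fst (M t) < t \<and> steps_at S q (fst (M t)) \<and>
        snd (M t) < length (sent A V S (fst (M t))) \<and> sent A V S (fst (M t)) ! snd (M t) = (p, m)"
    proof (intro allI impI)
      fix t p q m assume s: "S t = Some (p, InMsg q m)"
      then obtain l i where e: "E t = EMsg p q l i" by (cases "E t") (auto simp: S_def)
      obtain m' where c: "ctr (cfs A V E t) (q,l,i) = Some (p, m')" using leg e by (metis legal.simps(2))
      have "m' = m" using s e c by (auto simp: S_def)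
      then show "fst (M t) < t \<and> steps_at S q (fst (M t)) \<and>
        snd (M t) < length (sent A V S (fst (M t))) \<and> sent A V S (fst (M t)) ! snd (M t) = (p, m)"
        using Mdef[OF e c] by (auto simp: sent_eq steps_eq)
    qed
    show "\<forall>t1 t2. recv_at S t1 \<and> recv_at S t2 \<and> M t1 = M t2 \<longrightarrow> t1 = t2"
    proof (intro allI impI)
      fix t1 t2 assume h: "recv_at S t1 \<and> recv_at S t2 \<and> M t1 = M t2"
      obtain p1 q1 l1 i1 where e1: "E t1 = EMsg p1 q1 l1 i1" using h
        by (cases "E t1") (auto simp: recv_at_def S_def)
      obtain p2 q2 l2 i2 where e2: "E t2 = EMsg p2 q2 l2 i2" using h
        by (cases "E t2") (auto simp: recv_at_def S_def)
      obtain m1 where c1: "ctr (cfs A V E t1) (q1,l1,i1) = Some (p1, m1)" using leg e1 by (metis legal.simps(2))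
      obtain m2 where c2: "ctr (cfs A V E t2) (q2,l2,i2) = Some (p2, m2)" using leg e2 by (metis legal.simps(2))
      obtain t1' where m1: "M t1 = (t1', i1)" "proc (E t1') = q1" "clc (cfs A V E t1') q1 = l1"
        using Mdef[OF e1 c1] by blast
      obtain t2' where m2: "M t2 = (t2', i2)" "proc (E t2') = q2" "clc (cfs A V E t2') q2 = l2"
        using Mdef[OF e2 c2] by blast
      have same: "q1 = q2" "l1 = l2" "i1 = i2" using m1 m2 h by auto
      have gen: "ta < tb \<Longrightarrow> E ta = EMsg pa q l i \<Longrightarrow> ctr (cfs A V E ta) (q,l,i) = Some (pa, ma)
          \<Longrightarrow> ctr (cfs A V E tb) (q,l,i) = Some (pb, mb) \<Longrightarrow> False" for ta tb pa pb ma mb q l i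
      proof -
        assume a: "ta < tb" "E ta = EMsg pa q l i" "ctr (cfs A V E ta) (q,l,i) = Some (pa, ma)"
          "ctr (cfs A V E tb) (q,l,i) = Some (pb, mb)"
        have lt: "l < clc (cfs A V E ta) q" using wfD[OF wf_cfs a(3)] .
        have n: "ctr (cfs A V E (Suc ta)) (q,l,i) = None" using a(2) lt by (auto simp: stepc_simps)
        have "l < clc (cfs A V E (Suc ta)) q" using lt cfs_mono[of ta "Suc ta" A V E q] by simp
        then have "ctr (cfs A V E tb) (q,l,i) = None" using ctr_none_persist[OF n] a(1) by simp
        then show False using a(4) by simp
      qed
      show "t1 = t2"
      proof (rule ccontr)
        assume "t1 \<noteq> t2"
        then consider "t1 < t2" | "t2 < t1" by linarith
        then show False
        proof cases
          case 1 then show False using gen[OF 1 e1 c1] c2 same by auto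
        next
          case 2 then show False using gen[OF 2 e2 c2] c1 same by auto
        qed
      qed
    qed
    show "\<forall>t' i. i < length (sent A V S t') \<and> fst (sent A V S t' ! i) \<in> P - Faulty F \<longrightarrow>
        (\<exists>t. recv_at S t \<and> M t = (t', i))"
    proof (intro allI impI)
      fix t' i assume h: "i < length (sent A V S t') \<and> fst (sent A V S t' ! i) \<in> P - Faulty F"
      let ?q = "proc (E t')" let ?l = "clc (cfs A V E t') (proc (E t'))"
      obtain p m where pm: "msgs A V E t' ! i = (p, m)" by fastforce
      have c: "ctr (cfs A V E (Suc t')) (?q, ?l, i) = Some (p, m)"
        using ctr_fresh[of i A V E t'] h pm by (simp add: sent_eq)
      have pX: "p \<in> X" using h pm correct by (simp add: sent_eq)
      obtain t2 where e2: "E t2 = EMsg p ?q ?l i" using fr pX c unfolding fair_def by blast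
      obtain m2 where c2: "ctr (cfs A V E t2) (?q,?l,i) = Some (p, m2)" using leg e2 by (metis legal.simps(2))
      obtain t2' where m2: "M t2 = (t2', i)" "proc (E t2') = ?q" "clc (cfs A V E t2') ?q = ?l"
        using Mdef[OF e2 c2] by blast
      have "t2' = t'" using clc_unique[of E t2' ?q t' A V] m2 by simp
      moreover have "recv_at S t2" by (simp add: recv_at_def S_def e2)
      ultimately show "\<exists>t. recv_at S t \<and> M t = (t', i)" using m2 by blast
    qed
    show "\<forall>t p c d. S t = Some (p, InResp c d) \<longrightarrow>
        resp c = Some d \<and> (\<exists>t'<t. \<exists>v. queried A V S p c v t') \<and>
        (\<forall>t'' d'. S t'' = Some (p, InResp c d') \<longrightarrow> t'' = t)"
    proof (intro allI impI)
      fix t p c d assume s: "S t = Some (p, InResp c d)"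
      then have e: "E t = EResp p c" and d: "d = False" by (cases "E t"; auto simp: S_def)+
      have lg: "c < cnq (cfs A V E t) p" "c \<notin> cR (cfs A V E t) p" using leg e by (metis legal.simps(3))+
      obtain t' where t': "t' < t" "proc (E t') = p" "qo A V E t' \<noteq> None" "cnq (cfs A V E t') p = c"
        using Q_source[OF lg(1)] by blast
      have q: "queried A V S p c (the (qo A V E t')) t'"
        using t' by (auto simp: queried_def steps_eq qout_eq nq_eq)
      have uniq: "t'' = t" if s2: "S t'' = Some (p, InResp c d')" for t'' d'
      proof -
        have e2: "E t'' = EResp p c" using s2 by (cases "E t''"; auto simp: S_def)
        have lg2: "c \<notin> cR (cfs A V E t'') p" using leg e2 by (metis legal.simps(3))
        have in1: "c \<in> cR (cfs A V E (Suc t)) p" using e by (simp add: stepc_simps)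
        have in2: "c \<in> cR (cfs A V E (Suc t'')) p" using e2 by (simp add: stepc_simps)
        show ?thesis
        proof (rule ccontr)
          assume "t'' \<noteq> t"
          then consider "Suc t \<le> t''" | "Suc t'' \<le> t" by linarith
          then show False
          proof cases
            case 1 then show False using cfs_mono[OF 1, of A V E p] in1 lg2 by auto
          next
            case 2 then show False using cfs_mono[OF 2, of A V E p] in2 lg(2) by auto
          qed
        qed
      qed
      show "resp c = Some d \<and> (\<exists>t'<t. \<exists>v. queried A V S p c v t') \<and>
        (\<forall>t'' d'. S t'' = Some (p, InResp c d') \<longrightarrow> t'' = t)"
        using d q t'(1) uniq by (auto simp: resp_def)
    qed
    show "\<forall>c d. resp c = Some d \<longrightarrow>
        (\<forall>W. (\<forall>p\<in>P. \<forall>v. Qv A V S c p = Some v \<longrightarrow> W p = v) \<longrightarrow> d \<in> kTAg P k F W)"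
    proof (intro allI impI)
      fix c d W assume "resp c = Some d"
      then have d: "d = False" by (simp add: resp_def)
      have "\<not> (card (Faulty F) \<le> k - 1)" using cF2 k1 by linarith
      then show "d \<in> kTAg P k F W" using d by (simp add: kTAg_def)
    qed
    show "\<forall>c. card {p \<in> P. Qv A V S c p \<noteq> None} \<ge> card P - f \<longrightarrow>
        (\<exists>d. resp c = Some d \<and>
           (\<forall>p \<in> P - Faulty F. Qv A V S c p \<noteq> None \<longrightarrow> (\<exists>t. S t = Some (p, InResp c d))))"
    proof (intro allI impI)
      fix c
      have "\<exists>t. S t = Some (p, InResp c False)" if p: "p \<in> P - Faulty F" and qv: "Qv A V S c p \<noteq> None" for p
      proof -
        obtain v t where "queried A V S p c v t" using qv by (auto simp: Qv_def split: if_splits)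
        then have t: "proc (E t) = p" "qo A V E t \<noteq> None" "cnq (cfs A V E t) p = c"
          by (auto simp: queried_def steps_eq qout_eq nq_eq)
        then have "c < cnq (cfs A V E (Suc t)) p" by (auto simp: stepc_simps qo_def)
        moreover have "p \<in> X" using p correct by simp
        ultimately obtain t2 where "E t2 = EResp p c" using fr unfolding fair_def by blast
        then have "S t2 = Some (p, InResp c False)" by (simp add: S_def)
        then show ?thesis by blast
      qed
      then show "\<exists>d. resp c = Some d \<and>
           (\<forall>p \<in> P - Faulty F. Qv A V S c p \<noteq> None \<longrightarrow> (\<exists>t. S t = Some (p, InResp c d)))"
        by (auto simp: resp_def)
    qed
    show "\<forall>c1 c2 d. (\<forall>p\<in>P. Qv A V S c2 p \<noteq> None \<longrightarrow> Qv A V S c1 p = Qv A V S c2 p)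
        \<and> resp c2 = Some d \<longrightarrow> resp c1 = Some d"
      by (simp add: resp_def)
  qed
  have T2: "kTAg_task {1..n} k f = (kTAg P k, f)" by (simp add: kTAg_task_def P_def)
  have T1: "Cons n f = (kTAg P n, f)" by (simp add: Cons_def kTAg_task_def P_def)
  have R: "(\<forall>p \<in> P - Faulty F. \<exists>t. decision A (exec A V S t p) \<noteq> None)
       \<and> (\<forall>p\<in>P. \<forall>t t' d. t \<le> t' \<and> decision A (exec A V S t p) = Some d \<longrightarrow>
             decision A (exec A V S t' p) = Some d)
       \<and> (\<forall>p\<in>P. \<forall>q\<in>P. \<forall>t t' d d'. decision A (exec A V S t p) = Some d \<and>
             decision A (exec A V S t' q) = Some d' \<longrightarrow> d = d')
       \<and> (\<forall>p\<in>P. \<forall>t d. decision A (exec A V S t p) = Some d \<longrightarrow> d \<in> kTAg P n F V)"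
    using sol[unfolded solves_with_consistent_oracle_def T1 T2 fst_conv snd_conv P_def, rule_format,
       OF conjI[OF fpat[unfolded P_def] conjI[OF cF1 adm[unfolded P_def]]]]
    unfolding P_def .
  have FF: "(\<lambda>t. ({1..n} - L) \<union> (if T0 \<le> t then L - X else {})) = F"
    by (simp add: F_def K_def P_def)
  have R2: "(\<forall>p \<in> X. \<exists>t. decision A (cst (cfs A V E t) p) \<noteq> None)
       \<and> (\<forall>p\<in>P. \<forall>t t' d. t \<le> t' \<and> decision A (cst (cfs A V E t) p) = Some d \<longrightarrow>
             decision A (cst (cfs A V E t') p) = Some d)
       \<and> (\<forall>p\<in>P. \<forall>q\<in>P. \<forall>t t' d d'. decision A (cst (cfs A V E t) p) = Some d \<and>
             decision A (cst (cfs A V E t') q) = Some d' \<longrightarrow> d = d')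
       \<and> (\<forall>p\<in>P. \<forall>t d. decision A (cst (cfs A V E t) p) = Some d \<longrightarrow> d \<in> kTAg P n F V)"
    using R unfolding exec_eq correct .
  show ?thesis using R2 unfolding FF P_def .
qed



locale flp =
  fixes A :: "('s,'m) alg" and n k f :: nat and L :: "nat set"
  assumes sol: "solves_with_consistent_oracle A {1..n} (Cons n f) (kTAg_task {1..n} k f)"
  and k1: "1 \<le> k" and kf: "k + 1 \<le> f" and fn: "f + 1 \<le> n"
  and LP: "L \<subseteq> {1..n}" and cK: "card ({1..n} - L) = k"
begin

lemma finL: "finite L" using LP finite_subset by blast

lemma cardL: "card L = n - k"
proof -
  have "card ({1..n} - L) = card {1..n} - card L" using LP by (simp add: card_Diff_subset finL)
  moreover have "card L \<le> card {1..n}" by (rule card_mono[OF _ LP]) simp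
  ultimately show ?thesis using cK by simp
qed

lemma cardL2: "2 \<le> card L" using cardL k1 kf fn by linarith

definition TermP :: "(nat \<Rightarrow> bool) \<Rightarrow> nat set \<Rightarrow> (nat \<Rightarrow> ev) \<Rightarrow> bool" where
  "TermP V X E \<longleftrightarrow> (\<forall>p\<in>X. \<exists>t. decision A (cst (cfs A V E t) p) \<noteq> None)"
definition PersP :: "(nat \<Rightarrow> bool) \<Rightarrow> (nat \<Rightarrow> ev) \<Rightarrow> bool" where
  "PersP V E \<longleftrightarrow> (\<forall>p\<in>{1..n}. \<forall>t t' d. t \<le> t' \<and> decision A (cst (cfs A V E t) p) = Some d \<longrightarrow>
          decision A (cst (cfs A V E t') p) = Some d)"
definition AgrP :: "(nat \<Rightarrow> bool) \<Rightarrow> (nat \<Rightarrow> ev) \<Rightarrow> bool" where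
  "AgrP V E \<longleftrightarrow> (\<forall>p\<in>{1..n}. \<forall>q\<in>{1..n}. \<forall>t t' d d'. decision A (cst (cfs A V E t) p) = Some d \<and>
          decision A (cst (cfs A V E t') q) = Some d' \<longrightarrow> d = d')"
definition ValidP :: "(nat \<Rightarrow> bool) \<Rightarrow> nat set \<Rightarrow> ev list \<Rightarrow> (nat \<Rightarrow> ev) \<Rightarrow> bool" where
  "ValidP V X h0 E \<longleftrightarrow> (\<forall>p\<in>{1..n}. \<forall>t d. decision A (cst (cfs A V E t) p) = Some d \<longrightarrow>
          d \<in> kTAg {1..n} n (\<lambda>t. ({1..n} - L) \<union> (if length h0 \<le> t then L - X else {})) V)"
definition HistP :: "(nat \<Rightarrow> bool) \<Rightarrow> nat set \<Rightarrow> ev list \<Rightarrow> (nat \<Rightarrow> ev) \<Rightarrow> bool" where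
  "HistP V X h0 E \<longleftrightarrow> (\<forall>t. \<exists>h zs. legal_run A L (init A V) h \<and> t \<le> length h \<and> (\<forall>t'\<le>length h. cfs A V E t' = run A (init A V) (take t' h))
           \<and> h = h0 @ zs \<and> legal_run A X (run A (init A V) h0) zs)"

lemma complete:
  assumes h0: "legal_run A L (init A V) h0" and X: "X \<subseteq> L" "X \<noteq> {}" "card (L - X) \<le> 1"
  shows "\<exists>E. TermP V X E \<and> PersP V E \<and> AgrP V E \<and> ValidP V X h0 E \<and> HistP V X h0 E"
proof -
  define Inv where "Inv h = legal_run A L (init A V) h" for h
  define ext where "ext s h = [jobev X (run A (init A V) h) s]" for s h
  have ex: "(\<exists>ys. ext s h = ys @ [jobev X (run A (init A V) h) s])
              \<and> legal_run A X (run A (init A V) h) (ext s h) \<and> Inv (h @ ext s h)" if ih: "Inv h" for s h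
  proof -
    have "legal (run A (init A V) h) (jobev X (run A (init A V) h) s)"
         "proc (jobev X (run A (init A V) h) s) \<in> X" using jobev_ok[OF X(2)] by auto
    moreover have "legal_run A L (init A V) h" using ih by (simp add: Inv_def)
    ultimately show ?thesis using X(1) by (auto simp: ext_def Inv_def)
  qed
  have inv0: "Inv h0" using h0 by (simp add: Inv_def)
  have invL: "\<forall>h. Inv h \<longrightarrow> legal_run A L (init A V) h" by (simp add: Inv_def)
  have ex': "\<forall>s h. Inv h \<longrightarrow> (\<exists>ys. ext s h = ys @ [jobev X (run A (init A V) h) s])
              \<and> legal_run A X (run A (init A V) h) (ext s h) \<and> Inv (h @ ext s h)"
    by (intro allI impI) (rule ex)
  from gen[where X=X and L=L and Inv=Inv and A=A and V=V and ext=ext, OF X(2,1) inv0 invL ex']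
  obtain E where EE: "(\<forall>t. legal (cfs A V E t) (E t)) \<and> (\<forall>t. proc (E t) \<in> (if t < length h0 then L else X))
     \<and> fair A V X E
     \<and> (\<forall>t. \<exists>h zs. Inv h \<and> t \<le> length h \<and> (\<forall>t'\<le>length h. cfs A V E t' = run A (init A V) (take t' h))
           \<and> h = h0 @ zs \<and> legal_run A X (run A (init A V) h0) zs)" by (elim exE)
  from EE have E1: "\<forall>t. legal (cfs A V E t) (E t)" by (rule conjunct1)
  from EE have E2: "\<forall>t. proc (E t) \<in> (if t < length h0 then L else X)" by (elim conjE)
  from EE have E3: "fair A V X E" by (elim conjE)
  from EE have E4: "HistP V X h0 E" unfolding HistP_def Inv_def by (elim conjE)
  note B = bridge[OF sol LP X(1) cK X(3) kf k1 E1 E2 E3]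
  have "TermP V X E \<and> PersP V E \<and> AgrP V E \<and> ValidP V X h0 E"
    unfolding TermP_def PersP_def AgrP_def ValidP_def by (rule B)
  then show ?thesis using E4 by blast
qed

lemma hist_at:
  assumes "HistP V X h0 E"
  shows "\<exists>h zs. t \<le> length h \<and> (\<forall>t'\<le>length h. cfs A V E t' = run A (init A V) (take t' h))
           \<and> h = h0 @ zs \<and> legal_run A X (run A (init A V) h0) zs \<and> legal_run A L (init A V) h"
  using assms unfolding HistP_def by blast

lemma cfs_h0:
  assumes "HistP V X h0 E" "t \<le> length h0"
  shows "cfs A V E t = run A (init A V) (take t h0)"
proof -
  obtain h zs where h: "length h0 \<le> length h" "\<forall>t'\<le>length h. cfs A V E t' = run A (init A V) (take t' h)"
     "h = h0 @ zs" using hist_at[OF assms(1), of "length h0"] by blast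
  have "t \<le> length h" using h(1) assms(2) by simp
  then have "cfs A V E t = run A (init A V) (take t h)" using h(2) by simp
  then show ?thesis using h(3) assms(2) by simp
qed

lemma Lne: "L \<noteq> {}" using cardL2 by auto

lemma D1a:
  assumes lr: "legal_run A L (init A V) (xs @ ys)" and q: "q \<in> {1..n}"
  and d: "decision A (cst (run A (init A V) xs) q) = Some d"
  shows "decision A (cst (run A (init A V) (xs @ ys)) q) = Some d"
proof -
  obtain E where E: "PersP V E" "HistP V L (xs @ ys) E" using complete[OF lr subset_refl Lne] by auto
  have c1: "cfs A V E (length xs) = run A (init A V) xs" using cfs_h0[OF E(2), of "length xs"] by simp
  have c2: "cfs A V E (length (xs @ ys)) = run A (init A V) (xs @ ys)" using cfs_h0[OF E(2), of "length (xs @ ys)"] by simp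
  have "length xs \<le> length (xs @ ys) \<and> decision A (cst (cfs A V E (length xs)) q) = Some d"
    using c1 d by simp
  then have "decision A (cst (cfs A V E (length (xs @ ys))) q) = Some d"
    using E(1) q unfolding PersP_def by blast
  then show ?thesis using c2 by simp
qed

lemma D1:
  assumes lr: "legal_run A L (init A V) (xs @ ys)" and q: "q \<in> {1..n}" "q' \<in> {1..n}"
  and d: "decision A (cst (run A (init A V) xs) q) = Some d"
  and d': "decision A (cst (run A (init A V) (xs @ ys)) q') = Some d'"
  shows "d' = d"
proof -
  obtain E where E: "AgrP V E" "HistP V L (xs @ ys) E" using complete[OF lr subset_refl Lne] by auto
  have c1: "cfs A V E (length xs) = run A (init A V) xs" using cfs_h0[OF E(2), of "length xs"] by simp
  have c2: "cfs A V E (length (xs @ ys)) = run A (init A V) (xs @ ys)" using cfs_h0[OF E(2), of "length (xs @ ys)"] by simp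
  have "decision A (cst (cfs A V E (length xs)) q) = Some d \<and>
        decision A (cst (cfs A V E (length (xs @ ys))) q') = Some d'" using c1 c2 d d' by simp
  then show ?thesis using E(1) q unfolding AgrP_def by blast
qed

lemma D2:
  assumes lr: "legal_run A L (init A V) xs" and p: "p \<in> L"
  shows "\<exists>ys q. legal_run A (L - {p}) (run A (init A V) xs) ys \<and> q \<in> L - {p} \<and>
           decision A (cst (run A (init A V) (xs @ ys)) q) \<noteq> None"
proof -
  have ne: "L - {p} \<noteq> {}"
  proof
    assume "L - {p} = {}"
    then have "L \<subseteq> {p}" by auto
    then have "card L \<le> 1" using card_mono[of "{p}" L] by auto
    then show False using cardL2 by linarith
  qed
  have c1: "card (L - (L - {p})) \<le> 1"
  proof -
    have "L - (L - {p}) \<subseteq> {p}" by auto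
    then show ?thesis using card_mono[of "{p}"] by fastforce
  qed
  obtain E where E: "TermP V (L - {p}) E" "PersP V E" "HistP V (L - {p}) xs E"
    using complete[OF lr _ ne c1] by auto
  obtain q where q: "q \<in> L - {p}" using ne by blast
  obtain t d where td: "decision A (cst (cfs A V E t) q) = Some d" using E(1) q unfolding TermP_def by blast
  define T where "T = max t (length xs)"
  have qP: "q \<in> {1..n}" using q LP by auto
  have "t \<le> T \<and> decision A (cst (cfs A V E t) q) = Some d" using td unfolding T_def by simp
  then have dT: "decision A (cst (cfs A V E T) q) = Some d" using E(2) qP unfolding PersP_def by blast
  obtain h zs where h: "T \<le> length h" "\<forall>t'\<le>length h. cfs A V E t' = run A (init A V) (take t' h)"
     "h = xs @ zs" "legal_run A (L - {p}) (run A (init A V) xs) zs" using hist_at[OF E(3), of T] by blast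
  define ys where "ys = take (T - length xs) zs"
  have "take T h = xs @ ys" using h(3) unfolding ys_def T_def by simp
  then have cT: "cfs A V E T = run A (init A V) (xs @ ys)" using h(1,2) by simp
  have "legal_run A (L - {p}) (run A (init A V) xs) ys"
    using h(4) legal_run_append[of A "L - {p}" _ ys "drop (T - length xs) zs"] unfolding ys_def by simp
  then show ?thesis using q dT cT by auto
qed

lemma D3:
  assumes lr: "legal_run A L (init A V) xs" and q: "q \<in> {1..n}"
  and d: "decision A (cst (run A (init A V) xs) q) = Some d"
  shows "d \<in> kTAg {1..n} n (\<lambda>t::nat. {1..n} - L) V"
proof -
  obtain E where E: "ValidP V L xs E" "HistP V L xs E" using complete[OF lr subset_refl Lne] by auto
  have c1: "cfs A V E (length xs) = run A (init A V) xs" using cfs_h0[OF E(2), of "length xs"] by simp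
  have eq: "(\<lambda>t. ({1..n} - L) \<union> (if length xs \<le> t then L - L else {})) = (\<lambda>t::nat. {1..n} - L)" by (rule ext) auto
  have "decision A (cst (cfs A V E (length xs)) q) = Some d" using c1 d by simp
  then have "d \<in> kTAg {1..n} n (\<lambda>t. ({1..n} - L) \<union> (if length xs \<le> t then L - L else {})) V"
    using E(1) q unfolding ValidP_def by blast
  then show ?thesis unfolding eq .
qed

end

lemma change_point:
  fixes g :: "nat \<Rightarrow> bool"
  shows "g 0 \<noteq> g m \<Longrightarrow> \<exists>i<m. g i \<noteq> g (Suc i)"
proof (induction m)
  case 0 then show ?case by simp
next
  case (Suc m)
  then show ?case by (cases "g 0 = g m") (auto intro: less_SucI)
qed

context flp
begin

definition val :: "(nat \<Rightarrow> bool) \<Rightarrow> ev list \<Rightarrow> bool \<Rightarrow> bool" where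
  "val V h d \<longleftrightarrow> (\<exists>ys. legal_run A L (run A (init A V) h) ys \<and>
      (\<exists>q\<in>{1..n}. decision A (cst (run A (init A V) (h @ ys)) q) = Some d))"

definition bival :: "(nat \<Rightarrow> bool) \<Rightarrow> ev list \<Rightarrow> bool" where
  "bival V h \<longleftrightarrow> val V h False \<and> val V h True"

lemma U1:
  assumes "legal_run A L (init A V) h" "q \<in> {1..n}" "decision A (cst (run A (init A V) h) q) = Some d"
    "val V h d'"
  shows "d' = d"
proof -
  obtain ys q' where "legal_run A L (run A (init A V) h) ys" "q' \<in> {1..n}"
    "decision A (cst (run A (init A V) (h @ ys)) q') = Some d'" using assms(4) unfolding val_def by blast
  then show ?thesis using D1[of V h ys q q' d d'] assms by simp
qed

lemma U2:
  assumes "legal_run A L (init A V) h"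
  shows "\<exists>d. val V h d"
proof -
  obtain p where p: "p \<in> L" using cardL2 by (metis all_not_in_conv card.empty not_numeral_le_zero)
  obtain ys q where "legal_run A (L - {p}) (run A (init A V) h) ys" "q \<in> L - {p}"
    "decision A (cst (run A (init A V) (h @ ys)) q) \<noteq> None" using D2[OF assms p] by blast
  moreover have "legal_run A L (run A (init A V) h) ys" using legal_run_mono[OF calculation(1) Diff_subset] .
  ultimately show ?thesis unfolding val_def using LP by blast
qed

lemma U3:
  assumes "legal_run A L (init A V) h" "q \<in> {1..n}" "decision A (cst (run A (init A V) h) q) = Some d"
  shows "\<not> bival V h"
  using U1[OF assms] unfolding bival_def by (metis (full_types))

lemma unival:
  assumes "legal_run A L (init A V) h" "\<not> bival V h" "val V h d"
  shows "val V h d' \<longleftrightarrow> d' = d"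
  using assms unfolding bival_def by (cases d; cases d') auto


lemma dec_persist:
  assumes "legal_run A L (init A V) (xs @ ys)" "q \<in> {1..n}"
    "decision A (cst (run A (init A V) xs) q) = Some d"
  shows "decision A (cst (run A (init A V) (xs @ ys)) q) = Some d"
  by (rule D1a[OF assms])

lemma lemma3:
  assumes lr: "legal_run A L (init A V) h" and bv: "bival V h"
  and le: "legal (run A (init A V) h) e" and pe: "proc e \<in> L"
  shows "\<exists>ys. legal_run A L (run A (init A V) h) ys \<and> legal (run A (init A V) (h @ ys)) e
              \<and> bival V (h @ ys @ [e])"
proof (rule ccontr)
  assume NB0: "\<not> ?thesis"
  define c where "c = run A (init A V) h"
  have wfc: "wf c" unfolding c_def by (simp add: wf_run wf_init)
  define good where "good ys \<longleftrightarrow> legal_run A L c ys \<and> e \<notin> set ys" for ys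
  have good_legal: "legal (run A c ys) e" if "good ys" for ys
    using stay_legal_run[OF le[folded c_def] _ _ wfc] that unfolding good_def by blast
  have good_lr: "legal_run A L (init A V) (h @ ys @ [e])" if "good ys" for ys
    using lr good_legal[OF that] pe that unfolding good_def c_def by simp
  have NB: "\<not> bival V (h @ ys @ [e])" if "good ys" for ys
    using NB0 good_legal[OF that] that unfolding good_def c_def by auto
  define U where "U ys = (SOME d. val V (h @ ys @ [e]) d)" for ys
  have Uval: "val V (h @ ys @ [e]) d \<longleftrightarrow> d = U ys" if gy: "good ys" for ys d
  proof -
    obtain d0 where d0: "val V (h @ ys @ [e]) d0" using U2[OF good_lr[OF gy]] by blast
    have "val V (h @ ys @ [e]) (U ys)" unfolding U_def using d0 by (rule someI)
    then show ?thesis using unival[OF good_lr[OF gy] NB[OF gy]] by blast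
  qed
  have stepA: "\<exists>ys. good ys \<and> U ys = d" for d
  proof -
    have "val V h d" using bv unfolding bival_def by (cases d) auto
    then obtain zs q where zs: "legal_run A L c zs" "q \<in> {1..n}"
      "decision A (cst (run A (init A V) (h @ zs)) q) = Some d" unfolding val_def c_def by blast
    show ?thesis
    proof (cases "e \<in> set zs")
      case False
      then have g: "good zs" using zs unfolding good_def by simp
      have "decision A (cst (run A (init A V) ((h @ zs) @ [e])) q) = Some d"
        using dec_persist[of V "h @ zs" "[e]" q d] good_lr[OF g] zs by simp
      then have "val V (h @ zs @ [e]) d" unfolding val_def using zs(2)
        by (metis append.assoc append_Nil2 legal_run.simps(1))
      then show ?thesis using Uval[OF g] g by blast
    next
      case True
      then obtain ys ws where s: "zs = ys @ e # ws" "e \<notin> set ys" by (meson split_list_first)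
      have g: "good ys" using zs(1) s unfolding good_def by simp
      have "legal_run A L (run A c (ys @ [e])) ws" using zs(1) s by simp
      then have "val V (h @ ys @ [e]) d" unfolding val_def c_def using zs s
        by (auto intro!: exI[of _ ws])
      then show ?thesis using Uval[OF g] g by blast
    qed
  qed
  have g0: "good []" unfolding good_def by simp
  obtain ys1 where ys1: "good ys1" "U ys1 = (\<not> U [])" using stepA by blast
  have gtake: "good (take j ys1)" for j
    using ys1(1) unfolding good_def
    by (metis append_take_drop_id in_set_takeD legal_run_append)
  obtain i where i: "i < length ys1" "U (take i ys1) \<noteq> U (take (Suc i) ys1)"
    using change_point[of "\<lambda>j. U (take j ys1)" "length ys1"] ys1(2) by auto
  define P where "P = take i ys1"
  define a where "a = ys1 ! i"
  have Pa: "take (Suc i) ys1 = P @ [a]" unfolding P_def a_def using i(1) by (simp add: take_Suc_conv_app_nth)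
  have gP: "good P" and gPa: "good (P @ [a])" using gtake[of i] gtake[of "Suc i"] Pa P_def by auto
  define d where "d = U P"
  have vP: "val V (h @ P @ [e]) d' \<longleftrightarrow> d' = d" for d' using Uval[OF gP] d_def by simp
  have vPa: "val V (h @ (P @ [a]) @ [e]) d' \<longleftrightarrow> d' = (\<not> d)" for d'
    using Uval[OF gPa] i(2) Pa unfolding d_def P_def by auto
  define C0 where "C0 = run A c P"
  have wfC0: "wf C0" unfolding C0_def using wfc by (simp add: wf_run)
  have lC0e: "legal C0 e" using good_legal[OF gP] C0_def by simp
  have lC0a: "legal C0 a" and pa: "proc a \<in> L" and ae: "a \<noteq> e"
    using gPa unfolding good_def C0_def by auto
  have runP: "run A (init A V) (h @ P) = C0" unfolding C0_def c_def by simp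
  show False
  proof (cases "proc a = proc e")
    case False
    have cm: "stepc A (stepc A C0 e) a = stepc A (stepc A C0 a) e"
      using commute1[OF lC0e lC0a _ wfC0] False by auto
    have l1: "legal (stepc A C0 e) a" using stay_legal[OF lC0a lC0e _ wfC0] ae by auto
    obtain ws q where ws: "legal_run A L (run A (init A V) (h @ (P @ [a]) @ [e])) ws" "q \<in> {1..n}"
      "decision A (cst (run A (init A V) ((h @ (P @ [a]) @ [e]) @ ws)) q) = Some (\<not> d)"
      using vPa[of "\<not> d"] unfolding val_def by blast
    have "val V (h @ P @ [e]) (\<not> d)"
      unfolding val_def
      apply (rule exI[of _ "a # ws"])
      using ws l1 pa cm runP by auto
    then show False using vP by simp
  next
    case True
    define p where "p = proc e"
    have pL: "p \<in> L" using pe p_def by simp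
    have lrP: "legal_run A L (init A V) (h @ P)" using lr gP unfolding good_def c_def by simp
    obtain ws q where ws: "legal_run A (L - {p}) C0 ws" "q \<in> L - {p}"
      "decision A (cst (run A (init A V) ((h @ P) @ ws)) q) \<noteq> None"
      using D2[OF lrP pL] runP by auto
    obtain d' where d': "decision A (cst (run A C0 ws) q) = Some d'" using ws(3) runP by auto
    have qP: "q \<in> {1..n}" using ws(2) LP by auto
    have wsL: "legal_run A L C0 ws" using legal_run_mono[OF ws(1)] by blast
    have lrPws: "legal_run A L (init A V) (h @ P @ ws)" using lrP wsL runP by simp
    have cl1: "legal (run A C0 ws) e \<and> legal_run A (L - {p}) (stepc A C0 e) ws \<and>
         run A (stepc A C0 e) ws = stepc A (run A C0 ws) e"
      using commute_list[OF lC0e wfC0 ws(1)] p_def by simp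
    have "decision A (cst (run A (init A V) ((h @ P @ ws) @ [e])) q) = Some d'"
      apply (rule dec_persist[OF _ qP])
      using lrPws cl1 pe runP d' by auto
    then have "decision A (cst (run A (init A V) ((h @ P @ [e]) @ ws)) q) = Some d'"
      using cl1 runP by simp
    moreover have "legal_run A L (run A (init A V) (h @ P @ [e])) ws"
    proof -
      have "run A (init A V) (h @ P @ [e]) = stepc A C0 e" using runP by simp
      then show ?thesis using legal_run_mono[of A "L - {p}" "stepc A C0 e" ws L] cl1 by auto
    qed
    ultimately have "val V (h @ P @ [e]) d'" unfolding val_def using qP by blast
    then have dd: "d' = d" using vP by simp
    have pa': "proc a = p" using True p_def by simp
    have cl2: "legal (run A C0 ws) a \<and> legal_run A (L - {p}) (stepc A C0 a) ws \<and>
         run A (stepc A C0 a) ws = stepc A (run A C0 ws) a"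
      using commute_list[OF lC0a wfC0 ws(1)] pa' by simp
    define C1 where "C1 = stepc A C0 a"
    have lC1e: "legal C1 e" unfolding C1_def using stay_legal[OF lC0e lC0a ae wfC0] .
    have wfC1: "wf C1" unfolding C1_def using wfC0 by (simp add: wf_step)
    have lrC1: "legal_run A (L - {p}) C1 ws" using cl2 C1_def by simp
    have cl3: "legal (run A C1 ws) e \<and> legal_run A (L - {p}) (stepc A C1 e) ws \<and>
         run A (stepc A C1 e) ws = stepc A (run A C1 ws) e"
      using commute_list[OF lC1e wfC1 lrC1] p_def by simp
    have "decision A (cst (run A (init A V) ((h @ P @ ws) @ [a, e])) q) = Some d'"
      apply (rule dec_persist[OF _ qP])
      using lrPws cl2 cl3 pe pa runP d' unfolding C1_def by auto
    then have "decision A (cst (run A (init A V) ((h @ (P @ [a]) @ [e]) @ ws)) q) = Some d'"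
      using cl2 cl3 runP unfolding C1_def by simp
    moreover have "legal_run A L (run A (init A V) (h @ (P @ [a]) @ [e])) ws"
    proof -
      have "run A (init A V) (h @ (P @ [a]) @ [e]) = stepc A C1 e" using runP C1_def by simp
      then show ?thesis using legal_run_mono[of A "L - {p}" "stepc A C1 e" ws L] cl3 by auto
    qed
    ultimately have "val V (h @ (P @ [a]) @ [e]) d'" unfolding val_def using qP by blast
    then have "d' = (\<not> d)" using vPa by simp
    then show False using dd by simp
  qed
qed


lemma init_bival: "\<exists>V. bival V []"
proof (rule ccontr)
  assume nb: "\<not> (\<exists>V. bival V [])"
  define W where "W j = (\<lambda>p::nat. p \<le> j)" for j
  have lr0: "legal_run A L (init A V) []" for V by simp
  define U where "U j = (SOME d. val (W j) [] d)" for j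
  have Uv: "val (W j) [] d \<longleftrightarrow> d = U j" for j d
  proof -
    obtain d0 where d0: "val (W j) [] d0" using U2[OF lr0] by blast
    have "val (W j) [] (U j)" unfolding U_def using d0 by (rule someI)
    then show ?thesis using unival[OF lr0] nb by blast
  qed
  have valid: "d \<in> kTAg {1..n} n (\<lambda>t::nat. {1..n} - L) V" if vv: "val V [] d" for V d
  proof -
    obtain ys q where "legal_run A L (init A V) ys" "q \<in> {1..n}"
      "decision A (cst (run A (init A V) ys) q) = Some d" using vv unfolding val_def by auto
    then show ?thesis by (rule D3)
  qed
  have U0: "U 0 = False"
  proof -
    have "val (W 0) [] (U 0)" using Uv by simp
    then have "U 0 \<in> kTAg {1..n} n (\<lambda>t::nat. {1..n} - L) (W 0)" by (rule valid)
    moreover have "{p \<in> {1..n}. \<not> W 0 p} = {1..n}" by (auto simp: W_def)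
    then have "n \<le> card {p \<in> {1..n}. \<not> W 0 p}" by simp
    then have "kTAg {1..n} n (\<lambda>t::nat. {1..n} - L) (W 0) = {False}" by (simp only: kTAg_def if_P)
    ultimately show ?thesis by simp
  qed
  have Un: "U n = True"
  proof -
    have "val (W n) [] (U n)" using Uv by simp
    then have "U n \<in> kTAg {1..n} n (\<lambda>t::nat. {1..n} - L) (W n)" by (rule valid)
    have e1: "{p \<in> {1..n}. \<not> W n p} = {}" by (auto simp: W_def)
    have e2: "Faulty (\<lambda>t::nat. {1..n} - L) = {1..n} - L" by (simp add: Faulty_def)
    have e3: "k \<le> n - 1" using kf fn by linarith
    have e4: "n \<noteq> 0" using fn by simp
    have z: "\<not> (n \<le> card {p \<in> {1..n}. \<not> W n p})" unfolding e1 using e4 by simp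
    have a: "(\<forall>p\<in>{1..n}. W n p) \<and> card (Faulty (\<lambda>t::nat. {1..n} - L)) \<le> n - 1"
      using e2 e3 cK by (simp add: W_def)
    have "kTAg {1..n} n (\<lambda>t::nat. {1..n} - L) (W n) = {True}"
      by (simp only: kTAg_def if_not_P[OF z] if_P[OF a])
    with \<open>U n \<in> _\<close> show ?thesis by simp
  qed
  obtain i where i: "i < n" "U i \<noteq> U (Suc i)" using change_point[of U n] U0 Un by auto
  define j where "j = Suc i"
  have WS: "W (Suc i) = (W i)(j := True)" by (auto simp: W_def j_def fun_eq_iff)
  obtain p where p: "p \<in> L" "j \<notin> L - {p}"
  proof (cases "j \<in> L")
    case True then show ?thesis using that by auto
  next
    case False
    obtain p where "p \<in> L" using cardL2 by (metis all_not_in_conv card.empty not_numeral_le_zero)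
    then show ?thesis using that False by auto
  qed
  obtain ws q where ws: "legal_run A (L - {p}) (init A (W i)) ws" "q \<in> L - {p}"
      "decision A (cst (run A (init A (W i)) ws) q) \<noteq> None"
    using D2[OF lr0[of "W i"] p(1)] by auto
  obtain d where d: "decision A (cst (run A (init A (W i)) ws) q) = Some d" using ws(3) by auto
  have qP: "q \<in> {1..n}" using ws(2) LP by auto
  have qj: "q \<noteq> j" using ws(2) p(2) by auto
  have wsL: "legal_run A L (init A (W i)) ws" using legal_run_mono[OF ws(1) Diff_subset] .
  have "val (W i) [] d" unfolding val_def
    by (rule exI[of _ ws]) (use wsL d qP in auto)
  then have d1: "d = U i" using Uv by simp
  have rm: "legal_run A (L - {p}) (init A (W (Suc i))) ws \<and>
      run A (init A (W (Suc i))) ws = modst (run A (init A (W i)) ws) j (ini A j True)"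
    unfolding WS init_upd using run_modst[OF ws(1) p(2)] by blast
  have "decision A (cst (run A (init A (W (Suc i))) ws) q) = Some d" using rm d qj by simp
  moreover have "legal_run A L (init A (W (Suc i))) ws" using rm legal_run_mono[of A "L - {p}" _ ws L] by blast
  ultimately have "val (W (Suc i)) [] d" unfolding val_def
    by (intro exI[of _ ws]) (use qP in auto)
  then have "d = U (Suc i)" using Uv by simp
  then show False using d1 i(2) by simp
qed

lemma contradiction: False
proof -
  obtain V where bv0: "bival V []" using init_bival by blast
  have Lne: "L \<noteq> {}" using cardL2 by auto
  define Inv where "Inv h \<longleftrightarrow> legal_run A L (init A V) h \<and> bival V h" for h
  define ext where "ext s h = (SOME zs. (\<exists>ys. zs = ys @ [jobev L (run A (init A V) h) s]) \<and>
        legal_run A L (run A (init A V) h) zs \<and> bival V (h @ zs))" for s h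
  have ex': "\<forall>s h. Inv h \<longrightarrow> (\<exists>ys. ext s h = ys @ [jobev L (run A (init A V) h) s])
              \<and> legal_run A L (run A (init A V) h) (ext s h) \<and> Inv (h @ ext s h)"
  proof (intro allI impI)
    fix s h assume ih: "Inv h"
    let ?e = "jobev L (run A (init A V) h) s"
    have e: "legal (run A (init A V) h) ?e" "proc ?e \<in> L" using jobev_ok[OF Lne] by auto
    have ih1: "legal_run A L (init A V) h" and ih2: "bival V h" using ih unfolding Inv_def by auto
    have l3: "\<exists>ys. legal_run A L (run A (init A V) h) ys \<and> legal (run A (init A V) (h @ ys)) ?e
              \<and> bival V (h @ ys @ [?e])" using lemma3[OF ih1 ih2 e(1) e(2)] .
    then obtain ys where ys: "legal_run A L (run A (init A V) h) ys" "legal (run A (init A V) (h @ ys)) ?e"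
      "bival V (h @ ys @ [?e])" by blast
    have lr2: "legal_run A L (run A (init A V) h) (ys @ [?e])" using ys(1) ys(2) e(2) by simp
    have "\<exists>zs. (\<exists>ys. zs = ys @ [?e]) \<and> legal_run A L (run A (init A V) h) zs \<and> bival V (h @ zs)"
      by (rule exI[of _ "ys @ [?e]"]) (use lr2 ys(3) in simp)
    then have X: "(\<exists>ys. ext s h = ys @ [?e]) \<and> legal_run A L (run A (init A V) h) (ext s h) \<and> bival V (h @ ext s h)"
      unfolding ext_def by (rule someI_ex)
    then have "legal_run A L (init A V) (h @ ext s h)" using ih1 by simp
    then have "Inv (h @ ext s h)" using X unfolding Inv_def by blast
    then show "(\<exists>ys. ext s h = ys @ [?e]) \<and> legal_run A L (run A (init A V) h) (ext s h) \<and> Inv (h @ ext s h)"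
      using X by blast
  qed
  obtain E where E: "\<forall>t. legal (cfs A V E t) (E t)" "\<forall>t. proc (E t) \<in> (if t < length ([]::ev list) then L else L)"
     "fair A V L E"
     "\<forall>t. \<exists>h zs. Inv h \<and> t \<le> length h \<and> (\<forall>t'\<le>length h. cfs A V E t' = run A (init A V) (take t' h))
           \<and> h = [] @ zs \<and> legal_run A L (run A (init A V) []) zs"
  proof -
    have inv0: "Inv []" using bv0 by (simp add: Inv_def)
    have invL: "\<forall>h. Inv h \<longrightarrow> legal_run A L (init A V) h" by (simp add: Inv_def)
    from gen[where X=L and L=L and Inv=Inv and A=A and V=V and ext=ext, OF Lne subset_refl inv0 invL ex']
    obtain E where "(\<forall>t. legal (cfs A V E t) (E t)) \<and> (\<forall>t. proc (E t) \<in> (if t < length ([]::ev list) then L else L))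
     \<and> fair A V L E
     \<and> (\<forall>t. \<exists>h zs. Inv h \<and> t \<le> length h \<and> (\<forall>t'\<le>length h. cfs A V E t' = run A (init A V) (take t' h))
           \<and> h = [] @ zs \<and> legal_run A L (run A (init A V) []) zs)" by (elim exE)
    then show ?thesis using that by (elim conjE)
  qed
  have cLL: "card (L - L) \<le> 1" by simp
  note B = bridge[OF sol LP subset_refl cK cLL kf k1 E(1) E(2) E(3)]
  have BB: "TermP V L E \<and> PersP V E \<and> AgrP V E \<and> ValidP V L [] E"
    unfolding TermP_def PersP_def AgrP_def ValidP_def by (rule B)
  have T: "TermP V L E" using BB by (rule conjunct1)
  have Pe: "PersP V E" using conjunct1[OF conjunct2[OF BB]] .
  obtain p where p: "p \<in> L" using Lne by blast
  have "\<exists>t. decision A (cst (cfs A V E t) p) \<noteq> None" using T p unfolding TermP_def by (rule bspec)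
  then obtain t where pt: "decision A (cst (cfs A V E t) p) \<noteq> None" by (rule exE)
  obtain d where d: "decision A (cst (cfs A V E t) p) = Some d" using pt by auto
  from E(4)[rule_format, of t] obtain h zs where hh: "Inv h \<and> t \<le> length h \<and> (\<forall>t'\<le>length h. cfs A V E t' = run A (init A V) (take t' h))
           \<and> h = [] @ zs \<and> legal_run A L (run A (init A V) []) zs" by (elim exE)
  have h1: "Inv h" using conjunct1[OF hh] .
  have h2: "t \<le> length h" using conjunct1[OF conjunct2[OF hh]] .
  have h3: "\<forall>t'\<le>length h. cfs A V E t' = run A (init A V) (take t' h)"
    using conjunct1[OF conjunct2[OF conjunct2[OF hh]]] .
  have pP: "p \<in> {1..n}" using p LP by auto
  have PP: "\<forall>t t' d. t \<le> t' \<and> decision A (cst (cfs A V E t) p) = Some d \<longrightarrow>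
          decision A (cst (cfs A V E t') p) = Some d" using Pe pP unfolding PersP_def by (rule bspec)
  have "decision A (cst (cfs A V E (length h)) p) = Some d" using PP[rule_format, of t "length h" d] h2 d by simp
  then have dd: "decision A (cst (run A (init A V) h) p) = Some d" using h3 by simp
  have i1: "legal_run A L (init A V) h" and i2: "bival V h" using h1 unfolding Inv_def by auto
  show False using U3[OF i1 pP dd] i2 by simp
qed

end

theorem mainTheorem11:
  fixes k f n :: nat and A :: "('s, 'm) alg"
  assumes "1 \<le> k" and "k + 1 \<le> f" and "f + 1 \<le> n"
  shows "\<not> solves_with_consistent_oracle A {1..n} (Cons n f) (kTAg_task {1..n} k f)"
proof
  assume sol: "solves_with_consistent_oracle A {1..n} (Cons n f) (kTAg_task {1..n} k f)"
  have "{1..n} - {k+1..n} = {1..k}" using assms by auto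
  then have c: "card ({1..n} - {k+1..n}) = k" by simp
  interpret flp A n k f "{k+1..n}"
    using sol assms c by unfold_locales auto
  show False by (rule contradiction)
qed


end
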